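(* Let $X$ be a compact nonpositively curved cube complex and $(\tilde Y,\phi)$ a quasiline in $\tilde X$. Then there exist constants $N,M$, depending only on $(\tilde Y,\phi)$, such that for every integer $k>0$: (1) $\operatorname{diam}\big(H^+\cap\phi^{\pm k}(H^-)\big)\le kN$ for every essential hyperplane $H$ of $\tilde Y$ with halfspaces $H^+,H^-$; (2) if an essential hyperplane $H$ of $\tilde Y$ crosses a combinatorial geodesic $\gamma$ in $\tilde Y$ at an edge $e_0$, and $e_0$ has distance $\ge kM$ from both endpoints of $\gamma$, then $\phi^{k}(H)$ and $\phi^{-k}(H)$ cross $\gamma$. Moreover, any constants $\overline M\ge M$, $\overline N\ge N$ also satisfy (2) and (1) respectively.
   Context: $\tilde X$ is the universal cover of $X$. A quasiline in $\tilde X$ is a pair $(\tilde Y,\phi)$ with $\tilde Y\subset\tilde X$ a convex subcomplex and $\phi\in\pi_1X$ nontrivial such that $\langle\phi\rangle$ acts cocompactly on $\tilde Y$. Hyperplanes of $\tilde Y$ and their halfspaces $H^\pm$ (components of $\tilde Y$ minus the open carrier of $H$) are taken in the CAT(0) cube complex $\tilde Y$. A halfspace is deep if it contains points arbitrarily far from $H$; $H$ is essential if both halfspaces are deep. *)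

theory Defs
  imports Complex_Main
begin

text \<open>Graphs are given by an adjacency relation E on a vertex type; notions
relative to a vertex set S use the induced subgraph on S.\<close>

definition walk_in :: "'v set \<Rightarrow> ('v \<Rightarrow> 'v \<Rightarrow> bool) \<Rightarrow> 'v list \<Rightarrow> bool" where
  "walk_in S E xs \<longleftrightarrow> xs \<noteq> [] \<and> set xs \<subseteq> S \<and>
     (\<forall>i. Suc i < length xs \<longrightarrow> E (xs ! i) (xs ! Suc i))"

definition gdist :: "'v set \<Rightarrow> ('v \<Rightarrow> 'v \<Rightarrow> bool) \<Rightarrow> 'v \<Rightarrow> 'v \<Rightarrow> nat" where
  "gdist S E x y = (LEAST n. \<exists>xs. walk_in S E xs \<and> hd xs = x \<and> last xs = y \<and> length xs = Suc n)"

definition geodesic_in :: "'v set \<Rightarrow> ('v \<Rightarrow> 'v \<Rightarrow> bool) \<Rightarrow> 'v list \<Rightarrow> bool" where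
  "geodesic_in S E xs \<longleftrightarrow> walk_in S E xs \<and> length xs - 1 = gdist S E (hd xs) (last xs)"

definition interval :: "'v set \<Rightarrow> ('v \<Rightarrow> 'v \<Rightarrow> bool) \<Rightarrow> 'v \<Rightarrow> 'v \<Rightarrow> 'v set" where
  "interval S E u v = {x \<in> S. gdist S E u x + gdist S E x v = gdist S E u v}"

definition median_graph :: "('v \<Rightarrow> 'v \<Rightarrow> bool) \<Rightarrow> bool" where
  "median_graph E \<longleftrightarrow>
     (\<forall>x y. E x y \<longrightarrow> E y x) \<and> (\<forall>x. \<not> E x x) \<and>
     (\<forall>x y. \<exists>xs. walk_in UNIV E xs \<and> hd xs = x \<and> last xs = y) \<and>
     (\<forall>u v w. \<exists>!m. m \<in> interval UNIV E u v \<inter> interval UNIV E v w \<inter> interval UNIV E u w)"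

definition locally_finite :: "('v \<Rightarrow> 'v \<Rightarrow> bool) \<Rightarrow> bool" where
  "locally_finite E \<longleftrightarrow> (\<forall>x. finite {y. E x y})"

definition is_cube :: "('v \<Rightarrow> 'v \<Rightarrow> bool) \<Rightarrow> 'v set \<Rightarrow> bool" where
  "is_cube E C \<longleftrightarrow> (\<exists>n (f :: bool list \<Rightarrow> 'v).
     bij_betw f {xs. length xs = n} C \<and>
     (\<forall>xs ys. length xs = n \<longrightarrow> length ys = n \<longrightarrow>
        (E (f xs) (f ys) \<longleftrightarrow> card {i. i < n \<and> xs ! i \<noteq> ys ! i} = 1)))"

definition graph_aut :: "('v \<Rightarrow> 'v \<Rightarrow> bool) \<Rightarrow> ('v \<Rightarrow> 'v) \<Rightarrow> bool" where
  "graph_aut E g \<longleftrightarrow> bij g \<and> (\<forall>x y. E x y \<longleftrightarrow> E (g x) (g y))"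

text \<open>G is a group of cubical automorphisms acting freely and cocompactly:
  the deck group \<pi>1 X of a compact nonpositively curved cube complex X = X~/G.\<close>
definition free_cocompact_group :: "('v \<Rightarrow> 'v \<Rightarrow> bool) \<Rightarrow> ('v \<Rightarrow> 'v) set \<Rightarrow> bool" where
  "free_cocompact_group E G \<longleftrightarrow>
     (\<forall>g\<in>G. graph_aut E g) \<and> id \<in> G \<and>
     (\<forall>g\<in>G. \<forall>h\<in>G. g \<circ> h \<in> G) \<and> (\<forall>g\<in>G. inv g \<in> G) \<and>
     (\<forall>g\<in>G. \<forall>C. is_cube E C \<and> g ` C = C \<longrightarrow> g = id) \<and>
     (\<exists>F. finite F \<and> (\<forall>x. \<exists>g\<in>G. g x \<in> F))"

definition fpow :: "('v \<Rightarrow> 'v) \<Rightarrow> int \<Rightarrow> 'v \<Rightarrow> 'v" where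
  "fpow f k = (if 0 \<le> k then f ^^ nat k else inv f ^^ nat (- k))"

definition convex_set :: "('v \<Rightarrow> 'v \<Rightarrow> bool) \<Rightarrow> 'v set \<Rightarrow> bool" where
  "convex_set E Y \<longleftrightarrow> (\<forall>a\<in>Y. \<forall>b\<in>Y. interval UNIV E a b \<subseteq> Y)"

definition quasiline :: "('v \<Rightarrow> 'v \<Rightarrow> bool) \<Rightarrow> ('v \<Rightarrow> 'v) set \<Rightarrow> 'v set \<Rightarrow> ('v \<Rightarrow> 'v) \<Rightarrow> bool" where
  "quasiline E G Y \<phi> \<longleftrightarrow> Y \<noteq> {} \<and> convex_set E Y \<and> \<phi> \<in> G \<and> \<phi> \<noteq> id \<and> \<phi> ` Y = Y \<and>
     (\<exists>F. finite F \<and> F \<subseteq> Y \<and> Y \<subseteq> (\<Union>k::int. fpow \<phi> k ` F))"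

text \<open>Hyperplanes of the cube complex spanned by S are the Djokovic-Winkler
  classes of edges; the hyperplane dual to the edge (a,b) is given by its dual edges.\<close>
definition dual_edges :: "'v set \<Rightarrow> ('v \<Rightarrow> 'v \<Rightarrow> bool) \<Rightarrow> 'v \<Rightarrow> 'v \<Rightarrow> ('v \<times> 'v) set" where
  "dual_edges S E a b = {(c, d). c \<in> S \<and> d \<in> S \<and> E c d \<and>
      gdist S E a c + gdist S E b d \<noteq> gdist S E a d + gdist S E b c}"

definition carrier :: "'v set \<Rightarrow> ('v \<Rightarrow> 'v \<Rightarrow> bool) \<Rightarrow> 'v \<Rightarrow> 'v \<Rightarrow> 'v set" where
  "carrier S E a b = {c. \<exists>d. (c, d) \<in> dual_edges S E a b}"

definition halfspace :: "'v set \<Rightarrow> ('v \<Rightarrow> 'v \<Rightarrow> bool) \<Rightarrow> 'v \<Rightarrow> 'v \<Rightarrow> 'v set" where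
  "halfspace S E a b = {x \<in> S. gdist S E x a < gdist S E x b}"

definition deep :: "'v set \<Rightarrow> ('v \<Rightarrow> 'v \<Rightarrow> bool) \<Rightarrow> 'v \<Rightarrow> 'v \<Rightarrow> bool" where
  "deep S E a b \<longleftrightarrow> (\<forall>R. \<exists>x \<in> halfspace S E a b. \<forall>c \<in> carrier S E a b. R \<le> gdist S E x c)"

definition essential :: "'v set \<Rightarrow> ('v \<Rightarrow> 'v \<Rightarrow> bool) \<Rightarrow> 'v \<Rightarrow> 'v \<Rightarrow> bool" where
  "essential S E a b \<longleftrightarrow> deep S E a b \<and> deep S E b a"

end

theory Submission
  imports Defs
begin

lemma walk_single[simp]: "walk_in S E [x] \<longleftrightarrow> x \<in> S"
  by (auto simp: walk_in_def)

lemma walk_cons2: "walk_in S E (x # y # zs) \<longleftrightarrow> x \<in> S \<and> E x y \<and> walk_in S E (y # zs)"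
proof
  assume h: "walk_in S E (x # y # zs)"
  have "Suc 0 < length (x # y # zs)" by simp
  then have "E ((x # y # zs) ! 0) ((x # y # zs) ! Suc 0)" using h unfolding walk_in_def by blast
  then have "E x y" by simp
  moreover have "walk_in S E (y # zs)" unfolding walk_in_def
  proof (intro conjI allI impI)
    fix i assume "Suc i < length (y # zs)"
    then have "Suc (Suc i) < length (x # y # zs)" by simp
    then have "E ((x # y # zs) ! Suc i) ((x # y # zs) ! Suc (Suc i))" using h unfolding walk_in_def by blast
    then show "E ((y # zs) ! i) ((y # zs) ! Suc i)" by simp
  qed (use h in \<open>auto simp: walk_in_def\<close>)
  ultimately show "x \<in> S \<and> E x y \<and> walk_in S E (y # zs)" using h by (auto simp: walk_in_def)
next
  assume h: "x \<in> S \<and> E x y \<and> walk_in S E (y # zs)"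
  show "walk_in S E (x # y # zs)" unfolding walk_in_def
  proof (intro conjI allI impI)
    fix i assume i: "Suc i < length (x # y # zs)"
    show "E ((x # y # zs) ! i) ((x # y # zs) ! Suc i)"
    proof (cases i)
      case 0 then show ?thesis using h by simp
    next
      case (Suc j)
      then have "Suc j < length (y # zs)" using i by simp
      then have "E ((y # zs) ! j) ((y # zs) ! Suc j)" using h unfolding walk_in_def by blast
      then show ?thesis using Suc by simp
    qed
  qed (use h in \<open>auto simp: walk_in_def\<close>)
qed

lemma walk_nonempty: "walk_in S E xs \<Longrightarrow> xs \<noteq> []" by (simp add: walk_in_def)
lemma walk_set: "walk_in S E xs \<Longrightarrow> set xs \<subseteq> S" by (simp add: walk_in_def)
lemma walk_step: "walk_in S E xs \<Longrightarrow> Suc i < length xs \<Longrightarrow> E (xs ! i) (xs ! Suc i)"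
  by (simp add: walk_in_def)

lemma walk_append:
  "walk_in S E xs \<Longrightarrow> walk_in S E ys \<Longrightarrow> last xs = hd ys \<Longrightarrow> walk_in S E (xs @ tl ys)"
proof (induction xs)
  case Nil then show ?case by (simp add: walk_in_def)
next
  case (Cons x xs)
  show ?case
  proof (cases xs)
    case Nil
    obtain ys' where ys': "ys = x # ys'" using Cons.prems walk_nonempty[OF Cons.prems(2)] Nil by (cases ys) auto
    show ?thesis using Cons.prems(2) Nil unfolding ys' by simp
  next
    case (Cons y zs)
    have h: "x \<in> S \<and> E x y \<and> walk_in S E (y # zs)" using Cons.prems(1) Cons by (simp add: walk_cons2)
    then have w: "walk_in S E (y # zs)" and xy: "x \<in> S" "E x y" by auto
    have "walk_in S E (xs @ tl ys)" using Cons.IH w Cons.prems \<open>xs = y # zs\<close> by simp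
    then show ?thesis using xy \<open>xs = y # zs\<close> by (simp add: walk_cons2)
  qed
qed

lemma walk_rev:
  assumes sym: "\<And>x y. E x y \<Longrightarrow> E y x" and w: "walk_in S E xs"
  shows "walk_in S E (rev xs)"
  unfolding walk_in_def
proof (intro conjI allI impI)
  fix i assume i: "Suc i < length (rev xs)"
  define n where "n = length xs"
  have i': "Suc i < n" using i n_def by simp
  have k: "Suc (n - 2 - i) = n - 1 - i" using i' by linarith
  have "Suc (n - 2 - i) < n" using i' by linarith
  then have "E (xs ! (n - 2 - i)) (xs ! Suc (n - 2 - i))" using w walk_step n_def by blast
  then have e: "E (xs ! (n - 2 - i)) (xs ! (n - 1 - i))" by (simp only: k)
  have r1: "rev xs ! i = xs ! (n - 1 - i)" using i' n_def by (simp add: rev_nth)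
  have r2: "rev xs ! Suc i = xs ! (n - 2 - i)" using i' n_def by (simp add: rev_nth)
  show "E (rev xs ! i) (rev xs ! Suc i)" unfolding r1 r2 using sym e by blast
qed (use w in \<open>auto simp: walk_in_def\<close>)

lemma walk_take: assumes w: "walk_in S E xs" and n: "0 < n" shows "walk_in S E (take n xs)"
  unfolding walk_in_def
proof (intro conjI allI impI)
  show "take n xs \<noteq> []" using n walk_nonempty[OF w] by simp
  show "set (take n xs) \<subseteq> S" using set_take_subset[of n xs] walk_set[OF w] by (rule order_trans)
  fix i assume i: "Suc i < length (take n xs)"
  then have "Suc i < length xs" by simp
  then have "E (xs!i) (xs!Suc i)" using walk_step w by blast
  then show "E (take n xs ! i) (take n xs ! Suc i)" using i by simp
qed

lemma walk_drop: assumes w: "walk_in S E xs" and n: "n < length xs" shows "walk_in S E (drop n xs)"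
  unfolding walk_in_def
proof (intro conjI allI impI)
  show "drop n xs \<noteq> []" using n by simp
  show "set (drop n xs) \<subseteq> S" using set_drop_subset[of n xs] walk_set[OF w] by (rule order_trans)
  fix i assume i: "Suc i < length (drop n xs)"
  then have "Suc (n+i) < length xs" by simp
  then have "E (xs!(n+i)) (xs!Suc(n+i))" using walk_step w by blast
  then show "E (drop n xs ! i) (drop n xs ! Suc i)" using n by simp
qed

lemma walk_map:
  assumes "\<And>x y. E x y \<Longrightarrow> E (g x) (g y)" "g ` S \<subseteq> S" "walk_in S E xs"
  shows "walk_in S E (map g xs)"
  using assms unfolding walk_in_def by (auto simp: image_subset_iff)

lemma walk_mono: "S \<subseteq> S' \<Longrightarrow> walk_in S E xs \<Longrightarrow> walk_in S' E xs"
  unfolding walk_in_def by auto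

lemma gdist_le:
  assumes "walk_in S E xs" "hd xs = x" "last xs = y"
  shows "gdist S E x y \<le> length xs - 1"
proof -
  have "length xs = Suc (length xs - 1)" using walk_nonempty[OF assms(1)] by (cases xs) auto
  then show ?thesis unfolding gdist_def using assms by (intro Least_le) blast
qed

lemma gdist_refl: "x \<in> S \<Longrightarrow> gdist S E x x = 0"
  using gdist_le[of S E "[x]" x x] by simp

locale cgraph =
  fixes S :: "'v set" and E :: "'v \<Rightarrow> 'v \<Rightarrow> bool"
  assumes symE: "\<And>x y. E x y \<Longrightarrow> E y x"
    and conn: "\<And>x y. x \<in> S \<Longrightarrow> y \<in> S \<Longrightarrow> \<exists>xs. walk_in S E xs \<and> hd xs = x \<and> last xs = y"
begin

abbreviation dd where "dd \<equiv> gdist S E"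

lemma gdist_walk:
  assumes "x \<in> S" "y \<in> S"
  shows "\<exists>xs. walk_in S E xs \<and> hd xs = x \<and> last xs = y \<and> length xs = Suc (dd x y)"
proof -
  obtain xs where xs: "walk_in S E xs" "hd xs = x" "last xs = y" using conn assms by blast
  have "length xs = Suc (length xs - 1)" using walk_nonempty[OF xs(1)] by (cases xs) auto
  then have "\<exists>n xs. walk_in S E xs \<and> hd xs = x \<and> last xs = y \<and> length xs = Suc n" using xs by blast
  then show ?thesis unfolding gdist_def by (rule LeastI_ex)
qed

lemma gdist_eq0: "x \<in> S \<Longrightarrow> y \<in> S \<Longrightarrow> dd x y = 0 \<Longrightarrow> x = y"
  using gdist_walk[of x y] by (auto simp: length_Suc_conv)

lemma gdist_edge: "x \<in> S \<Longrightarrow> y \<in> S \<Longrightarrow> E x y \<Longrightarrow> dd x y \<le> 1"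
  using gdist_le[of S E "[x,y]" x y] by (simp add: walk_cons2)

lemma gdist_triangle:
  assumes "x \<in> S" "y \<in> S" "z \<in> S"
  shows "dd x z \<le> dd x y + dd y z"
proof -
  obtain xs where xs: "walk_in S E xs" "hd xs = x" "last xs = y" "length xs = Suc (dd x y)"
    using gdist_walk assms by blast
  obtain ys where ys: "walk_in S E ys" "hd ys = y" "last ys = z" "length ys = Suc (dd y z)"
    using gdist_walk assms by blast
  have w: "walk_in S E (xs @ tl ys)" using walk_append[OF xs(1) ys(1)] xs(3) ys(2) by simp
  have h1: "hd (xs @ tl ys) = x" using xs walk_nonempty[OF xs(1)] by simp
  have h2: "last (xs @ tl ys) = z"
  proof (cases "tl ys = []")
    case True then have "ys = [y]" using ys walk_nonempty[OF ys(1)] by (cases ys) auto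
    then show ?thesis using True xs ys by simp
  next
    case False then show ?thesis using ys by (cases ys) auto
  qed
  have "dd x z \<le> length (xs @ tl ys) - 1" using gdist_le[OF w h1 h2] .
  then show ?thesis using xs ys by simp
qed

lemma gdist_sym:
  assumes "x \<in> S" "y \<in> S" shows "dd x y = dd y x"
proof -
  have *: "dd u v \<le> dd v u" if uv: "u \<in> S" "v \<in> S" for u v
  proof -
    obtain xs where xs: "walk_in S E xs" "hd xs = v" "last xs = u" "length xs = Suc (dd v u)"
      using gdist_walk[OF uv(2) uv(1)] by blast
    have "walk_in S E (rev xs)" using walk_rev[OF symE xs(1)] by blast
    moreover have "hd (rev xs) = u" "last (rev xs) = v"
      using xs walk_nonempty[OF xs(1)] by (auto simp: hd_rev last_rev)
    ultimately show ?thesis using gdist_le[of S E "rev xs" u v] xs by simp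
  qed
  show ?thesis using *[of x y] *[of y x] assms by simp
qed

lemma gdist_pred:
  assumes "x \<in> S" "y \<in> S" "dd x y = Suc n"
  shows "\<exists>w\<in>S. dd x w = n \<and> E w y"
proof -
  obtain xs where xs: "walk_in S E xs" "hd xs = x" "last xs = y" "length xs = Suc (Suc n)"
    using gdist_walk[OF assms(1,2)] assms(3) by auto
  let ?w = "xs ! n"
  have wS: "?w \<in> S" using xs walk_set[OF xs(1)] by (simp add: subset_iff)
  have "E ?w (xs ! Suc n)" using walk_step[OF xs(1), of n] xs(4) by simp
  moreover have "xs ! Suc n = y"
  proof -
    have ne: "xs \<noteq> []" using xs(4) by auto
    have "last xs = xs ! (length xs - 1)" using ne by (rule last_conv_nth)
    then show ?thesis using xs(3,4) by simp
  qed
  ultimately have E: "E ?w y" by simp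
  have t1: "walk_in S E (take (Suc n) xs)" using walk_take xs by blast
  have t2: "hd (take (Suc n) xs) = x" using xs by (cases xs) auto
  have t3: "last (take (Suc n) xs) = ?w" using xs by (simp add: take_Suc_conv_app_nth)
  have le: "dd x ?w \<le> n" using gdist_le[OF t1 t2 t3] xs(4) by simp
  have "dd x y \<le> dd x ?w + dd ?w y" using gdist_triangle assms wS by blast
  moreover have "dd ?w y \<le> 1" using gdist_edge wS assms E by blast
  ultimately have "dd x ?w = n" using le assms by linarith
  then show ?thesis using wS E by blast
qed

lemma shortest_nth:
  assumes xs: "walk_in S E xs" "length xs = Suc (dd (hd xs) (last xs))" and i: "i < length xs"
  shows "dd (hd xs) (xs ! i) = i" "dd (xs ! i) (last xs) = length xs - 1 - i"
proof -
  have ne: "xs \<noteq> []" using walk_nonempty xs by blast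
  have S: "hd xs \<in> S" "last xs \<in> S" "xs ! i \<in> S" using walk_set[OF xs(1)] ne i by auto
  have t1: "walk_in S E (take (Suc i) xs)" using walk_take xs by blast
  have t2: "hd (take (Suc i) xs) = hd xs" using ne by (cases xs) auto
  have t3: "last (take (Suc i) xs) = xs ! i" using i by (simp add: take_Suc_conv_app_nth)
  have a: "dd (hd xs) (xs ! i) \<le> i" using gdist_le[OF t1 t2 t3] i by simp
  have u1: "walk_in S E (drop i xs)" using walk_drop xs i by blast
  have u2: "hd (drop i xs) = xs ! i" using i by (simp add: hd_drop_conv_nth)
  have u3: "last (drop i xs) = last xs" using i by simp
  have b: "dd (xs ! i) (last xs) \<le> length xs - 1 - i" using gdist_le[OF u1 u2 u3] i by simp
  have "dd (hd xs) (last xs) \<le> dd (hd xs) (xs ! i) + dd (xs ! i) (last xs)" using gdist_triangle S by blast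
  then show "dd (hd xs) (xs ! i) = i" "dd (xs ! i) (last xs) = length xs - 1 - i" using a b xs(2) i by linarith+
qed

lemma ball_finite:
  assumes lf: "\<And>x. finite {y. E x y}" and x: "x \<in> S"
  shows "finite {y \<in> S. dd x y \<le> r}"
proof (induction r)
  case 0
  have "{y \<in> S. dd x y \<le> 0} \<subseteq> {x}" using gdist_eq0 x by auto
  then show ?case using finite_subset by blast
next
  case (Suc r)
  let ?B = "{y \<in> S. dd x y \<le> r}"
  have sub: "{y \<in> S. dd x y \<le> Suc r} \<subseteq> ?B \<union> (\<Union>w\<in>?B. {y. E w y})"
  proof
    fix y assume y: "y \<in> {y \<in> S. dd x y \<le> Suc r}"
    then have yS: "y \<in> S" by simp
    show "y \<in> ?B \<union> (\<Union>w\<in>?B. {y. E w y})"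
    proof (cases "dd x y \<le> r")
      case True then show ?thesis using yS by simp
    next
      case False
      then have d: "dd x y = Suc r" using y by simp
      obtain w where "w \<in> S" "dd x w = r" "E w y" using gdist_pred[OF x yS d] by blast
      then show ?thesis by blast
    qed
  qed
  have f1: "finite ?B" by (rule Suc.IH)
  have f2: "finite (\<Union>w\<in>?B. {y. E w y})" by (rule finite_UN_I[OF f1 lf])
  show ?case by (rule finite_subset[OF sub finite_UnI[OF f1 f2]])
qed

end

lemma median_cgraph: "median_graph E \<Longrightarrow> cgraph UNIV E"
  unfolding median_graph_def by unfold_locales blast+

lemma walk_UNIV_Y: "walk_in UNIV E xs \<Longrightarrow> set xs \<subseteq> Y \<Longrightarrow> walk_in Y E xs"
  by (simp add: walk_in_def)

lemma convex_walk:
  assumes m: "median_graph E" and c: "convex_set E Y" and a: "a \<in> Y" and b: "b \<in> Y"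
  shows "\<exists>xs. walk_in Y E xs \<and> hd xs = a \<and> last xs = b \<and> length xs = Suc (gdist UNIV E a b)"
proof -
  interpret U: cgraph UNIV E by (rule median_cgraph[OF m])
  obtain xs where xs: "walk_in UNIV E xs" "hd xs = a" "last xs = b" "length xs = Suc (gdist UNIV E a b)"
    using U.gdist_walk by blast
  have "set xs \<subseteq> Y"
  proof
    fix v assume "v \<in> set xs"
    then obtain i where i: "i < length xs" "v = xs ! i" by (metis in_set_conv_nth)
    have l: "length xs = Suc (gdist UNIV E (hd xs) (last xs))" using xs by simp
    have "gdist UNIV E a v = i" "gdist UNIV E v b = length xs - 1 - i"
      using U.shortest_nth[OF xs(1) l i(1)] xs i by auto
    then have "v \<in> interval UNIV E a b" unfolding interval_def using xs(4) i by auto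
    then show "v \<in> Y" using c a b unfolding convex_set_def by blast
  qed
  then show ?thesis using xs walk_UNIV_Y by blast
qed

lemma Y_cgraph: "median_graph E \<Longrightarrow> convex_set E Y \<Longrightarrow> cgraph Y E"
proof -
  assume m: "median_graph E" and c: "convex_set E Y"
  show "cgraph Y E"
  proof
    show "E x y \<Longrightarrow> E y x" for x y using m unfolding median_graph_def by blast
    show "x \<in> Y \<Longrightarrow> y \<in> Y \<Longrightarrow> \<exists>xs. walk_in Y E xs \<and> hd xs = x \<and> last xs = y" for x y
      using convex_walk[OF m c] by blast
  qed
qed

lemma gdist_Y_eq:
  assumes m: "median_graph E" and c: "convex_set E Y" and a: "a \<in> Y" and b: "b \<in> Y"
  shows "gdist Y E a b = gdist UNIV E a b"
proof -
  interpret Yg: cgraph Y E by (rule Y_cgraph[OF m c])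
  obtain xs where xs: "walk_in Y E xs" "hd xs = a" "last xs = b" "length xs = Suc (gdist UNIV E a b)"
    using convex_walk[OF m c a b] by blast
  have le1: "gdist Y E a b \<le> gdist UNIV E a b" using gdist_le[OF xs(1-3)] xs(4) by simp
  obtain ys where ys: "walk_in Y E ys" "hd ys = a" "last ys = b" "length ys = Suc (gdist Y E a b)"
    using Yg.gdist_walk[OF a b] by blast
  have "walk_in UNIV E ys" using walk_mono[OF _ ys(1)] by blast
  then have "gdist UNIV E a b \<le> gdist Y E a b" using gdist_le[of UNIV E ys a b] ys by simp
  then show ?thesis using le1 by simp
qed

lemma median_side:
  assumes m: "median_graph E" and c: "convex_set E Y" and a: "a \<in> Y" and b: "b \<in> Y"
    and x: "x \<in> Y" and ab: "E a b"
  shows "gdist Y E x b = gdist Y E x a + 1 \<or> gdist Y E x a = gdist Y E x b + 1"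
proof -
  interpret U: cgraph UNIV E by (rule median_cgraph[OF m])
  have irr: "\<not> E a a" using m unfolding median_graph_def by blast
  then have "a \<noteq> b" using ab by blast
  then have "gdist UNIV E a b \<noteq> 0" using U.gdist_eq0 by blast
  moreover have "gdist UNIV E a b \<le> 1" using U.gdist_edge ab by blast
  ultimately have dab: "gdist UNIV E a b = 1" by simp
  have dba: "gdist UNIV E b a = 1" using dab U.gdist_sym by simp
  obtain mm where mm: "mm \<in> interval UNIV E x a \<inter> interval UNIV E a b \<inter> interval UNIV E x b"
    using m unfolding median_graph_def by blast
  have "gdist UNIV E a mm + gdist UNIV E mm b = 1" using mm dab unfolding interval_def by auto
  then have "gdist UNIV E a mm = 0 \<or> gdist UNIV E mm b = 0" by arith
  then have "mm = a \<or> mm = b" using U.gdist_eq0 by blast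
  then have "gdist UNIV E x b = gdist UNIV E x a + 1 \<or> gdist UNIV E x a = gdist UNIV E x b + 1"
    using mm dab dba unfolding interval_def by auto
  then show ?thesis using gdist_Y_eq[OF m c] a b x by simp
qed

definition Yaut :: "('v \<Rightarrow> 'v \<Rightarrow> bool) \<Rightarrow> 'v set \<Rightarrow> ('v \<Rightarrow> 'v) \<Rightarrow> bool" where
  "Yaut E Y g \<longleftrightarrow> graph_aut E g \<and> g ` Y = Y"

lemma Yaut_id: "Yaut E Y id"
  by (simp add: Yaut_def graph_aut_def)

lemma Yaut_comp: assumes "Yaut E Y f" "Yaut E Y g" shows "Yaut E Y (f \<circ> g)"
proof -
  have "(f \<circ> g) ` Y = f ` (g ` Y)" by (rule image_comp[symmetric])
  then have "(f \<circ> g) ` Y = Y" using assms unfolding Yaut_def by simp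
  moreover have "bij (f \<circ> g)" using assms unfolding Yaut_def graph_aut_def by (simp add: bij_comp)
  moreover have "E x y \<longleftrightarrow> E ((f \<circ> g) x) ((f \<circ> g) y)" for x y
    using assms unfolding Yaut_def graph_aut_def by simp
  ultimately show ?thesis unfolding Yaut_def graph_aut_def by blast
qed

lemma Yaut_inv: assumes "Yaut E Y g" shows "Yaut E Y (inv g)"
proof -
  have bg: "bij g" and Eg: "\<And>x y. E x y \<longleftrightarrow> E (g x) (g y)" and gY: "g ` Y = Y"
    using assms unfolding Yaut_def graph_aut_def by auto
  have fi: "\<And>x. g (inv g x) = x" using bg by (simp add: bij_is_surj surj_f_inv_f)
  have if': "\<And>x. inv g (g x) = x" using bg by (simp add: bij_is_inj inv_f_f)
  have "bij (inv g)" using bg by (rule bij_imp_bij_inv)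
  moreover have "E x y \<longleftrightarrow> E (inv g x) (inv g y)" for x y using Eg[of "inv g x" "inv g y"] fi by simp
  moreover have "inv g ` Y = Y"
  proof
    show "inv g ` Y \<subseteq> Y"
    proof
      fix z assume "z \<in> inv g ` Y"
      then obtain y where y: "y \<in> Y" "z = inv g y" by blast
      obtain w where w: "w \<in> Y" "y = g w" using y gY by blast
      show "z \<in> Y" using y w if' by simp
    qed
    show "Y \<subseteq> inv g ` Y"
    proof
      fix y assume "y \<in> Y"
      then have "g y \<in> Y" using gY by blast
      moreover have "y = inv g (g y)" using if' by simp
      ultimately show "y \<in> inv g ` Y" by blast
    qed
  qed
  ultimately show ?thesis unfolding Yaut_def graph_aut_def by blast
qed

lemma Yaut_mem: assumes "Yaut E Y g" shows "g x \<in> Y \<longleftrightarrow> x \<in> Y"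
proof -
  have "inj g" "g ` Y = Y" using assms unfolding Yaut_def graph_aut_def by (auto simp: bij_is_inj)
  then show ?thesis by (metis inj_image_mem_iff)
qed

lemma Yaut_E: "Yaut E Y g \<Longrightarrow> E x y \<longleftrightarrow> E (g x) (g y)"
  unfolding Yaut_def graph_aut_def by blast

lemma Yaut_inv_f: "Yaut E Y g \<Longrightarrow> inv g (g x) = x"
  unfolding Yaut_def graph_aut_def by (simp add: bij_is_inj inv_f_f)

lemma Yaut_f_inv: "Yaut E Y g \<Longrightarrow> g (inv g x) = x"
  unfolding Yaut_def graph_aut_def by (simp add: bij_is_surj surj_f_inv_f)

context cgraph begin

lemma Yaut_dist_le:
  assumes g: "Yaut E S g" and x: "x \<in> S" and y: "y \<in> S"
  shows "dd (g x) (g y) \<le> dd x y"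
proof -
  obtain xs where xs: "walk_in S E xs" "hd xs = x" "last xs = y" "length xs = Suc (dd x y)"
    using gdist_walk[OF x y] by blast
  have "walk_in S E (map g xs)"
  proof (rule walk_map[OF _ _ xs(1)])
    show "E (g u) (g v)" if "E u v" for u v using Yaut_E[OF g] that by blast
    show "g ` S \<subseteq> S" using Yaut_mem[OF g] by blast
  qed
  moreover have "hd (map g xs) = g x" "last (map g xs) = g y"
    using xs walk_nonempty[OF xs(1)] by (auto simp: hd_map last_map)
  ultimately show ?thesis using gdist_le[of S E "map g xs" "g x" "g y"] xs(4) by simp
qed

lemma Yaut_dist:
  assumes g: "Yaut E S g" and x: "x \<in> S" and y: "y \<in> S"
  shows "dd (g x) (g y) = dd x y"
proof -
  have gi: "Yaut E S (inv g)" by (rule Yaut_inv[OF g])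
  have gx: "g x \<in> S" "g y \<in> S" using Yaut_mem[OF g] x y by simp_all
  have "dd (inv g (g x)) (inv g (g y)) \<le> dd (g x) (g y)" by (rule Yaut_dist_le[OF gi gx])
  then have "dd x y \<le> dd (g x) (g y)" using Yaut_inv_f[OF g] by simp
  then show ?thesis using Yaut_dist_le[OF g x y] by simp
qed

end

lemma fpow_0: "fpow \<phi> 0 = id" by (simp add: fpow_def)

lemma fpow_succ: assumes b: "bij \<phi>" shows "fpow \<phi> (k + 1) = \<phi> \<circ> fpow \<phi> k"
proof -
  have fi: "\<phi> \<circ> inv \<phi> = id" using b by (metis bij_is_surj surj_iff)
  consider "0 \<le> k" | "k = -1" | "k < -1" by linarith
  then show ?thesis
  proof cases
    case 1
    then have "nat (k + 1) = Suc (nat k)" by simp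
    then show ?thesis using 1 by (simp add: fpow_def)
  next
    case 2 then show ?thesis using fi by (simp add: fpow_def)
  next
    case 3
    then have "nat (- k) = Suc (nat (- (k + 1)))" by simp
    then have "fpow \<phi> k = inv \<phi> \<circ> fpow \<phi> (k + 1)" using 3 by (simp add: fpow_def)
    then have "\<phi> \<circ> fpow \<phi> k = (\<phi> \<circ> inv \<phi>) \<circ> fpow \<phi> (k + 1)" by (simp add: comp_assoc)
    then show ?thesis using fi by simp
  qed
qed

lemma fpow_pred: assumes b: "bij \<phi>" shows "fpow \<phi> (k - 1) = inv \<phi> \<circ> fpow \<phi> k"
proof -
  have if': "inv \<phi> \<circ> \<phi> = id" using b by (metis bij_is_inj inj_iff)
  have "fpow \<phi> k = \<phi> \<circ> fpow \<phi> (k - 1)" using fpow_succ[OF b, of "k - 1"] by simp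
  then have "inv \<phi> \<circ> fpow \<phi> k = (inv \<phi> \<circ> \<phi>) \<circ> fpow \<phi> (k - 1)" by (simp add: comp_assoc)
  then show ?thesis using if' by simp
qed

lemma fpow_add: assumes b: "bij \<phi>" shows "fpow \<phi> (i + j) = fpow \<phi> i \<circ> fpow \<phi> j"
proof (induction i rule: int_induct[where k = 0])
  case base then show ?case by (simp add: fpow_0)
next
  case (step1 i)
  have "fpow \<phi> (i + 1 + j) = fpow \<phi> ((i + j) + 1)" by (simp add: ac_simps)
  also have "\<dots> = \<phi> \<circ> fpow \<phi> (i + j)" by (rule fpow_succ[OF b])
  also have "\<dots> = (\<phi> \<circ> fpow \<phi> i) \<circ> fpow \<phi> j" using step1 by (simp add: o_def)
  also have "\<dots> = fpow \<phi> (i + 1) \<circ> fpow \<phi> j" using fpow_succ[OF b, of i] by simp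
  finally show ?case .
next
  case (step2 i)
  have "fpow \<phi> (i - 1 + j) = fpow \<phi> ((i + j) - 1)" by (simp add: algebra_simps)
  also have "\<dots> = inv \<phi> \<circ> fpow \<phi> (i + j)" by (rule fpow_pred[OF b])
  also have "\<dots> = (inv \<phi> \<circ> fpow \<phi> i) \<circ> fpow \<phi> j" using step2 by (simp add: o_def)
  also have "\<dots> = fpow \<phi> (i - 1) \<circ> fpow \<phi> j" using fpow_pred[OF b, of i] by simp
  finally show ?case .
qed

lemma fpow_Yaut: assumes p: "Yaut E Y \<phi>" shows "Yaut E Y (fpow \<phi> k)"
proof -
  have b: "bij \<phi>" using p unfolding Yaut_def graph_aut_def by blast
  show ?thesis
  proof (induction k rule: int_induct[where k = 0])
    case base then show ?case unfolding fpow_0 by (rule Yaut_id)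
  next
    case (step1 i) show ?case unfolding fpow_succ[OF b, of i] by (rule Yaut_comp[OF p step1(2)])
  next
    case (step2 i) show ?case unfolding fpow_pred[OF b, of i] by (rule Yaut_comp[OF Yaut_inv[OF p] step2(2)])
  qed
qed

lemma fpow_apply_add: "bij \<phi> \<Longrightarrow> fpow \<phi> i (fpow \<phi> j x) = fpow \<phi> (i + j) x"
  by (simp add: fpow_add)

lemma fpow_cancel: "bij \<phi> \<Longrightarrow> fpow \<phi> (- i) (fpow \<phi> i x) = x"
  by (simp add: fpow_apply_add fpow_0)

lemma fpow_cancel2: "bij \<phi> \<Longrightarrow> fpow \<phi> i (fpow \<phi> (- i) x) = x"
  by (simp add: fpow_apply_add fpow_0)


lemma dual_edges_sym: "dual_edges S E a b = dual_edges S E b a"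
  unfolding dual_edges_def by auto

lemma carrier_sym: "carrier S E a b = carrier S E b a"
  unfolding carrier_def using dual_edges_sym by metis

lemma essential_sym: "essential S E a b \<Longrightarrow> essential S E b a"
  unfolding essential_def deep_def using carrier_sym by metis

locale coarse = cgraph +
  fixes Q :: "int \<Rightarrow> 'a" and hh :: "'a \<Rightarrow> int" and D \<tau> :: nat and \<rho> :: "nat \<Rightarrow> int"
  assumes Q_in: "Q j \<in> S"
    and near: "y \<in> S \<Longrightarrow> dd y (Q (hh y)) \<le> D"
    and stepQ: "dd (Q j) (Q (j + 1)) \<le> \<tau>"
    and proper: "dd (Q i) (Q j) \<le> r \<Longrightarrow> \<bar>i - j\<bar> \<le> \<rho> r"
begin

lemma rho_nonneg: "0 \<le> \<rho> r"
  using proper[of 0 0 r] gdist_refl[OF Q_in] by simp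

lemma Q_dist_up: "int (dd (Q i) (Q (i + int n))) \<le> int \<tau> * int n"
proof (induction n)
  case 0 then show ?case using gdist_refl[OF Q_in] by simp
next
  case (Suc n)
  have "dd (Q i) (Q (i + int n + 1)) \<le> dd (Q i) (Q (i + int n)) + dd (Q (i + int n)) (Q (i + int n + 1))"
    by (rule gdist_triangle[OF Q_in Q_in Q_in])
  moreover have "dd (Q (i + int n)) (Q (i + int n + 1)) \<le> \<tau>" by (rule stepQ)
  ultimately have "int (dd (Q i) (Q (i + int n + 1))) \<le> int \<tau> * int n + int \<tau>" using Suc by linarith
  moreover have "i + int (Suc n) = i + int n + 1" by simp
  ultimately show ?case by (simp add: algebra_simps)
qed

lemma Q_dist: "int (dd (Q i) (Q j)) \<le> int \<tau> * \<bar>i - j\<bar>"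
proof (cases "i \<le> j")
  case True
  then have "j = i + int (nat (j - i))" by simp
  then have "int (dd (Q i) (Q j)) \<le> int \<tau> * int (nat (j - i))" using Q_dist_up[of i "nat (j - i)"] by metis
  then show ?thesis using True by simp
next
  case False
  then have "i = j + int (nat (i - j))" by simp
  then have "int (dd (Q j) (Q i)) \<le> int \<tau> * int (nat (i - j))" using Q_dist_up[of j "nat (i - j)"] by metis
  then show ?thesis using False gdist_sym[OF Q_in Q_in, of i j] by simp
qed

lemma lipschitz:
  assumes x: "x \<in> S" and y: "y \<in> S"
  shows "int (dd x y) \<le> 2 * int D + int \<tau> * \<bar>hh x - hh y\<bar>"
proof -
  have "dd x y \<le> dd x (Q (hh x)) + dd (Q (hh x)) y" using gdist_triangle x y Q_in by blast
  moreover have "dd (Q (hh x)) y \<le> dd (Q (hh x)) (Q (hh y)) + dd (Q (hh y)) y" using gdist_triangle y Q_in by blast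
  moreover have "dd (Q (hh y)) y \<le> D" using near[OF y] gdist_sym[OF y Q_in] by simp
  moreover have "dd x (Q (hh x)) \<le> D" using near[OF x] .
  moreover have "int (dd (Q (hh x)) (Q (hh y))) \<le> int \<tau> * \<bar>hh x - hh y\<bar>" by (rule Q_dist)
  ultimately show ?thesis by linarith
qed

lemma coarse_cont:
  assumes x: "x \<in> S" and y: "y \<in> S" and d: "dd x y \<le> r"
  shows "\<bar>hh x - hh y\<bar> \<le> \<rho> (2 * D + r)"
proof -
  have "dd (Q (hh x)) (Q (hh y)) \<le> dd (Q (hh x)) x + dd x (Q (hh y))" using gdist_triangle x Q_in by blast
  moreover have "dd x (Q (hh y)) \<le> dd x y + dd y (Q (hh y))" using gdist_triangle x y Q_in by blast
  moreover have "dd (Q (hh x)) x \<le> D" using near[OF x] gdist_sym[OF x Q_in] by simp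
  moreover have "dd y (Q (hh y)) \<le> D" using near[OF y] .
  ultimately have "dd (Q (hh x)) (Q (hh y)) \<le> 2 * D + r" using d by linarith
  then show ?thesis by (rule proper)
qed

definition "r1 = max D \<tau>"
definition "W = \<rho> (D + r1)"
definition "\<rho>1 = \<rho> (2 * D + 1)"
definition "G = W + 2 * \<rho>1"

lemma W_nonneg: "0 \<le> W" unfolding W_def by (rule rho_nonneg)
lemma rho1_nonneg: "0 \<le> \<rho>1" unfolding \<rho>1_def by (rule rho_nonneg)
lemma G_nonneg: "0 \<le> G" unfolding G_def using W_nonneg rho1_nonneg by simp

lemma adj_cont: assumes "u \<in> S" "v \<in> S" "E u v" shows "\<bar>hh u - hh v\<bar> \<le> \<rho>1"
  unfolding \<rho>1_def using assms(1,2) gdist_edge[OF assms] by (rule coarse_cont)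

end

locale edge = coarse +
  fixes a b
  assumes a_in: "a \<in> S" and b_in: "b \<in> S" and ab: "E a b"
    and ess: "essential S E a b"
    and side: "\<And>x. x \<in> S \<Longrightarrow> dd x b = dd x a + 1 \<or> dd x a = dd x b + 1"
begin

abbreviation "A \<equiv> halfspace S E a b"
abbreviation "B \<equiv> halfspace S E b a"
abbreviation "K \<equiv> carrier S E a b"

lemma A_iff: "x \<in> A \<longleftrightarrow> x \<in> S \<and> dd x a < dd x b" unfolding halfspace_def by simp
lemma B_iff: "x \<in> B \<longleftrightarrow> x \<in> S \<and> dd x b < dd x a" unfolding halfspace_def by simp

lemma AB_cover: "x \<in> S \<Longrightarrow> x \<in> A \<or> x \<in> B"
  using side[of x] A_iff B_iff by auto

lemma AB_disj: "x \<in> A \<Longrightarrow> x \<in> B \<Longrightarrow> False"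
  using A_iff B_iff by auto

lemma A_S: "x \<in> A \<Longrightarrow> x \<in> S" using A_iff by simp
lemma B_S: "x \<in> B \<Longrightarrow> x \<in> S" using B_iff by simp

lemma dab: "dd a b = 1"
  using side[OF a_in] gdist_refl[OF a_in] by simp

lemma dba: "dd b a = 1"
  using dab gdist_sym[OF a_in b_in] by simp

lemma a_A: "a \<in> A" using A_iff a_in dab gdist_refl[OF a_in] by simp
lemma b_B: "b \<in> B" using B_iff b_in dba gdist_refl[OF b_in] by simp

lemma in_dual: "(c, d) \<in> dual_edges S E a b \<longleftrightarrow> c \<in> S \<and> d \<in> S \<and> E c d \<and> dd a c + dd b d \<noteq> dd a d + dd b c"
  unfolding dual_edges_def by simp

lemma cross:
  assumes u: "u \<in> A" and v: "v \<in> B" and e: "E u v"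
  shows "u \<in> K" "v \<in> K"
proof -
  have uS: "u \<in> S" and vS: "v \<in> S" using u v A_S B_S by auto
  have s: "dd a u = dd u a" "dd b u = dd u b" "dd a v = dd v a" "dd b v = dd v b"
    using gdist_sym uS vS a_in b_in by auto
  have "dd u a < dd u b" "dd v b < dd v a" using u v A_iff B_iff by auto
  then have "(u, v) \<in> dual_edges S E a b" using in_dual uS vS e s by auto
  then show "u \<in> K" unfolding carrier_def by blast
  have "(v, u) \<in> dual_edges S E a b" using in_dual uS vS symE[OF e] s \<open>dd u a < dd u b\<close> \<open>dd v b < dd v a\<close> by auto
  then show "v \<in> K" unfolding carrier_def by blast
qed

lemma K_S: "c \<in> K \<Longrightarrow> c \<in> S"
  unfolding carrier_def dual_edges_def by blast

lemma a_K: "a \<in> K" using cross(1)[OF a_A b_B ab] .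

lemma K_nbr:
  assumes c: "c \<in> K"
  shows "\<exists>c'\<in>S. E c c' \<and> ((c \<in> A \<and> c' \<in> B) \<or> (c \<in> B \<and> c' \<in> A))"
proof -
  obtain d where d: "(c, d) \<in> dual_edges S E a b" using c unfolding carrier_def by blast
  then have cS: "c \<in> S" and dS: "d \<in> S" and e: "E c d" and ne: "dd a c + dd b d \<noteq> dd a d + dd b c"
    using in_dual by auto
  have s: "dd a c = dd c a" "dd b c = dd c b" "dd a d = dd d a" "dd b d = dd d b"
    using gdist_sym cS dS a_in b_in by auto
  have sc: "dd c b = dd c a + 1 \<or> dd c a = dd c b + 1" using side[OF cS] .
  have sd: "dd d b = dd d a + 1 \<or> dd d a = dd d b + 1" using side[OF dS] .
  have "(c \<in> A \<and> d \<in> B) \<or> (c \<in> B \<and> d \<in> A)"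
    using sc sd ne s A_iff B_iff cS dS by auto
  then show ?thesis using dS e by blast
qed

lemma deepA: "\<exists>x\<in>A. \<forall>c\<in>K. R \<le> dd x c"
  using ess unfolding essential_def deep_def by blast

lemma deepB: "\<exists>x\<in>B. \<forall>c\<in>K. R \<le> dd x c"
  using ess carrier_sym[of S E a b] unfolding essential_def deep_def by metis

lemma reachA:
  assumes "x \<in> A" "P x" "\<not> P a"
  shows "\<exists>u v. u \<in> A \<and> v \<in> A \<and> E u v \<and> P u \<and> \<not> P v"
  using assms
proof (induction "dd x a" arbitrary: x)
  case 0
  then have "x = a" using gdist_eq0 A_S a_in by metis
  then show ?case using 0 by simp
next
  case (Suc n)
  have xS: "x \<in> S" using Suc.prems A_S by simp
  have "dd a x = Suc n" using Suc.hyps gdist_sym[OF xS a_in] by simp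
  then obtain w where wS: "w \<in> S" and dw: "dd a w = n" and ewx: "E w x" using gdist_pred[OF a_in xS] by blast
  have dwa: "dd w a = n" using dw gdist_sym[OF wS a_in] by simp
  have "dd x b \<le> dd x w + dd w b" using gdist_triangle xS wS b_in by blast
  moreover have "dd x w \<le> 1" using gdist_edge[OF xS wS symE[OF ewx]] .
  moreover have "dd x a < dd x b" using Suc.prems A_iff by simp
  ultimately have "dd w a < dd w b" using dwa Suc.hyps by linarith
  then have wA: "w \<in> A" using A_iff wS by simp
  show ?case
  proof (cases "P w")
    case True
    then show ?thesis using Suc.hyps(1)[of w] dwa wA Suc.prems by blast
  next
    case False
    then show ?thesis using Suc.prems wA symE[OF ewx] by blast
  qed
qed

lemma same_side:
  assumes u: "u \<in> S" and v: "v \<in> S" and d: "dd u v \<le> r" and far: "\<forall>c\<in>K. r < dd u c"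
  shows "u \<in> A \<longleftrightarrow> v \<in> A"
  using v d
proof (induction "dd u v" arbitrary: v)
  case 0
  then have "u = v" using gdist_eq0 u by metis
  then show ?case by simp
next
  case (Suc n)
  obtain w where wS: "w \<in> S" and dw: "dd u w = n" and ewv: "E w v" using gdist_pred[OF u Suc.prems(1)] Suc.hyps(2) by metis
  have IH: "u \<in> A \<longleftrightarrow> w \<in> A" using Suc.hyps(1)[of w] wS dw Suc.hyps(2) Suc.prems by simp
  have wK: "w \<notin> K" using far dw Suc.hyps(2) Suc.prems(2) by fastforce
  have vK: "v \<notin> K" using far Suc.prems(2) by fastforce
  have "w \<in> A \<longleftrightarrow> v \<in> A"
  proof
    assume wA: "w \<in> A"
    show "v \<in> A"
    proof (rule ccontr)
      assume "v \<notin> A"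
      then have "v \<in> B" using AB_cover Suc.prems(1) by blast
      then show False using cross(1)[OF wA _ ewv] wK by blast
    qed
  next
    assume vA: "v \<in> A"
    show "w \<in> A"
    proof (rule ccontr)
      assume "w \<notin> A"
      then have "w \<in> B" using AB_cover wS by blast
      then show False using cross(1)[OF vA _ symE[OF ewv]] vK by blast
    qed
  qed
  then show ?case using IH by simp
qed

lemma Q_far:
  assumes h: "\<forall>c\<in>K. W < \<bar>hh c - i\<bar>"
  shows "\<forall>c\<in>K. r1 < dd (Q i) c"
proof
  fix c assume c: "c \<in> K"
  have cS: "c \<in> S" using K_S c by simp
  show "r1 < dd (Q i) c"
  proof (rule ccontr)
    assume "\<not> r1 < dd (Q i) c"
    then have "dd (Q i) c \<le> r1" by simp
    moreover have "dd (Q i) (Q (hh c)) \<le> dd (Q i) c + dd c (Q (hh c))" using gdist_triangle cS Q_in by blast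
    moreover have "dd c (Q (hh c)) \<le> D" using near[OF cS] .
    ultimately have "dd (Q i) (Q (hh c)) \<le> D + r1" by linarith
    then have "\<bar>i - hh c\<bar> \<le> W" unfolding W_def by (rule proper)
    then show False using h c by auto
  qed
qed

lemma Q_chain:
  assumes h: "\<forall>c\<in>K. hh c < i0 - W \<or> i1 + W < hh c"
  shows "i0 \<le> i \<Longrightarrow> i \<le> i1 \<Longrightarrow> Q i \<in> A \<longleftrightarrow> Q i0 \<in> A"
proof -
  have "\<forall>n. i0 + int n \<le> i1 \<longrightarrow> (Q (i0 + int n) \<in> A \<longleftrightarrow> Q i0 \<in> A)"
  proof
    fix n show "i0 + int n \<le> i1 \<longrightarrow> (Q (i0 + int n) \<in> A \<longleftrightarrow> Q i0 \<in> A)"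
    proof (induction n)
      case 0 then show ?case by simp
    next
      case (Suc n)
      show ?case
      proof
        assume le: "i0 + int (Suc n) \<le> i1"
        let ?j = "i0 + int n"
        have "\<forall>c\<in>K. W < \<bar>hh c - ?j\<bar>" using h le by fastforce
        then have far: "\<forall>c\<in>K. r1 < dd (Q ?j) c" by (rule Q_far)
        have "dd (Q ?j) (Q (?j + 1)) \<le> r1" using stepQ[of ?j] unfolding r1_def by simp
        then have "Q ?j \<in> A \<longleftrightarrow> Q (?j + 1) \<in> A" using same_side[OF Q_in Q_in _ far] by blast
        moreover have "?j + 1 = i0 + int (Suc n)" by simp
        ultimately show "Q (i0 + int (Suc n)) \<in> A \<longleftrightarrow> Q i0 \<in> A" using Suc le by simp
      qed
    qed
  qed
  moreover assume "i0 \<le> i" "i \<le> i1"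
  moreover have "i = i0 + int (nat (i - i0))" using \<open>i0 \<le> i\<close> by simp
  ultimately show ?thesis by metis
qed

lemma band:
  assumes h: "\<forall>c\<in>K. hh c < i0 - W \<or> i1 + W < hh c"
    and y: "y \<in> S" and l: "i0 \<le> hh y" "hh y \<le> i1"
  shows "y \<in> A \<longleftrightarrow> Q i0 \<in> A"
proof -
  have "\<forall>c\<in>K. W < \<bar>hh c - hh y\<bar>" using h l by fastforce
  then have far: "\<forall>c\<in>K. r1 < dd (Q (hh y)) c" by (rule Q_far)
  have "dd (Q (hh y)) y \<le> r1" using near[OF y] gdist_sym[OF y Q_in] unfolding r1_def by simp
  then have "Q (hh y) \<in> A \<longleftrightarrow> y \<in> A" using same_side[OF Q_in y _ far] by blast
  then show ?thesis using Q_chain[OF h l] by simp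
qed

end

context edge begin

lemma sw_edge: "edge S E Q hh D \<tau> \<rho> b a"
proof (rule edge.intro)
  show "coarse S E Q hh D \<tau> \<rho>" by (rule coarse_axioms)
  show "edge_axioms S E b a"
  proof (rule edge_axioms.intro)
    show "b \<in> S" "a \<in> S" "E b a" using a_in b_in symE[OF ab] by auto
    show "essential S E b a" using essential_sym[OF ess] .
    show "dd x a = dd x b + 1 \<or> dd x b = dd x a + 1" if "x \<in> S" for x using side[OF that] by auto
  qed
qed

lemma mirror_edge: "edge S E (\<lambda>j. Q (- j)) (\<lambda>y. - hh y) D \<tau> \<rho> a b"
proof (rule edge.intro)
  show "coarse S E (\<lambda>j. Q (- j)) (\<lambda>y. - hh y) D \<tau> \<rho>"
  proof (rule coarse.intro[OF cgraph_axioms coarse_axioms.intro])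
    show "Q (- j) \<in> S" for j by (rule Q_in)
    show "dd y (Q (- (- hh y))) \<le> D" if "y \<in> S" for y using near[OF that] by simp
    show "dd (Q (- j)) (Q (- (j + 1))) \<le> \<tau>" for j
    proof -
      have "dd (Q (- j - 1)) (Q (- j - 1 + 1)) \<le> \<tau>" by (rule stepQ)
      then have "dd (Q (- (j + 1))) (Q (- j)) \<le> \<tau>" by simp
      then show ?thesis using gdist_sym[OF Q_in Q_in, of "- (j + 1)" "- j"] by simp
    qed
    show "\<bar>i - j\<bar> \<le> \<rho> r" if "dd (Q (- i)) (Q (- j)) \<le> r" for i j r
      using proper[OF that] by simp
  qed
  show "edge_axioms S E a b" by (rule edge.axioms(2)[OF edge_axioms])
qed

lemma B_nbr:
  assumes c: "c \<in> K"
  shows "\<exists>b1\<in>B. \<bar>hh b1 - hh c\<bar> \<le> \<rho>1"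
proof -
  obtain c' where c': "c' \<in> S" "E c c'" "(c \<in> A \<and> c' \<in> B) \<or> (c \<in> B \<and> c' \<in> A)" using K_nbr[OF c] by blast
  have cS: "c \<in> S" using K_S c by simp
  show ?thesis
  proof (cases "c \<in> B")
    case True then show ?thesis using rho1_nonneg by force
  next
    case False
    then have "c' \<in> B" using c' by blast
    moreover have "\<bar>hh c' - hh c\<bar> \<le> \<rho>1" using adj_cont[OF c'(1) cS symE[OF c'(2)]] .
    ultimately show ?thesis by blast
  qed
qed

lemma gapA:
  assumes c1: "c1 \<in> K" and c2: "c2 \<in> K" and h1: "hh c1 < t - W - \<rho>1"
    and h2: "t + \<rho>1 + W + \<rho>1 < hh c2"
    and bnd: "\<forall>y\<in>S. t \<le> hh y \<and> hh y \<le> t + \<rho>1 \<longrightarrow> y \<in> A"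
  shows False
proof -
  interpret sw: edge S E Q hh D \<tau> \<rho> b a by (rule sw_edge)
  obtain b1 where b1: "b1 \<in> B" "\<bar>hh b1 - hh c1\<bar> \<le> \<rho>1" using B_nbr[OF c1] by blast
  obtain b2 where b2: "b2 \<in> B" "\<bar>hh b2 - hh c2\<bar> \<le> \<rho>1" using B_nbr[OF c2] by blast
  have W0: "0 \<le> W" by (rule W_nonneg)
  have r0: "0 \<le> \<rho>1" by (rule rho1_nonneg)
  consider "hh b < t" | "t \<le> hh b \<and> hh b \<le> t + \<rho>1" | "t + \<rho>1 < hh b" by linarith
  then show False
  proof cases
    case 2
    then have "b \<in> A" using bnd b_in by blast
    then show False using AB_disj b_B by blast
  next
    case 1
    have "t \<le> hh b2" using b2 h2 W0 r0 by linarith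
    then obtain u v where uv: "u \<in> B" "v \<in> B" "E u v" "t \<le> hh u" "\<not> t \<le> hh v"
      using sw.reachA[of b2 "\<lambda>u. t \<le> hh u"] b2(1) 1 by auto
    have "\<bar>hh u - hh v\<bar> \<le> \<rho>1" using adj_cont uv B_S by blast
    then have "hh u \<le> t + \<rho>1" using uv by linarith
    then have "u \<in> A" using bnd uv B_S by blast
    then show False using AB_disj uv by blast
  next
    case 3
    have "hh b1 \<le> t + \<rho>1" using b1 h1 W0 r0 by linarith
    then obtain u v where uv: "u \<in> B" "v \<in> B" "E u v" "hh u \<le> t + \<rho>1" "\<not> hh v \<le> t + \<rho>1"
      using sw.reachA[of b1 "\<lambda>u. hh u \<le> t + \<rho>1"] b1(1) 3 by auto
    have "\<bar>hh u - hh v\<bar> \<le> \<rho>1" using adj_cont uv B_S by blast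
    then have "t \<le> hh u" using uv by linarith
    then have "u \<in> A" using bnd uv B_S by blast
    then show False using AB_disj uv by blast
  qed
qed

lemma stepA:
  assumes c1: "c1 \<in> K" and c2: "c2 \<in> K" and h1: "hh c1 < t - G" and h2: "t + G < hh c2"
  shows "\<exists>c\<in>K. \<bar>hh c - t\<bar> \<le> G"
proof (rule ccontr)
  assume no: "\<not> (\<exists>c\<in>K. \<bar>hh c - t\<bar> \<le> G)"
  have W0: "0 \<le> W" by (rule W_nonneg)
  have r0: "0 \<le> \<rho>1" by (rule rho1_nonneg)
  have h: "\<forall>c\<in>K. hh c < t - W \<or> t + \<rho>1 + W < hh c"
  proof
    fix c assume "c \<in> K"
    then have "G < \<bar>hh c - t\<bar>" using no by force
    then show "hh c < t - W \<or> t + \<rho>1 + W < hh c" unfolding G_def using r0 by linarith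
  qed
  have bd: "\<forall>y\<in>S. t \<le> hh y \<and> hh y \<le> t + \<rho>1 \<longrightarrow> (y \<in> A \<longleftrightarrow> Q t \<in> A)"
    using band[of t "t + \<rho>1"] h by (simp add: algebra_simps)
  have g1: "hh c1 < t - W - \<rho>1" using h1 r0 unfolding G_def by linarith
  have g2: "t + \<rho>1 + W + \<rho>1 < hh c2" using h2 unfolding G_def by linarith
  show False
  proof (cases "Q t \<in> A")
    case True
    then show False using gapA[OF c1 c2 g1 g2] bd by blast
  next
    case False
    interpret sw: edge S E Q hh D \<tau> \<rho> b a by (rule sw_edge)
    have bd': "\<forall>y\<in>S. t \<le> hh y \<and> hh y \<le> t + \<rho>1 \<longrightarrow> y \<in> B"
      using bd False AB_cover by blast
    have c1': "c1 \<in> carrier S E b a" and c2': "c2 \<in> carrier S E b a" using c1 c2 carrier_sym by metis+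
    show False using sw.gapA[OF c1' c2' g1 g2] bd' by blast
  qed
qed

lemma near_level:
  assumes y: "y \<in> S" and c: "c \<in> K" and h: "\<bar>hh c - hh y\<bar> \<le> Z"
  shows "int (dd y c) \<le> 2 * int D + int \<tau> * Z"
proof -
  have "int (dd y c) \<le> 2 * int D + int \<tau> * \<bar>hh y - hh c\<bar>" using lipschitz[OF y K_S[OF c]] .
  moreover have "int \<tau> * \<bar>hh y - hh c\<bar> \<le> int \<tau> * Z" using h by (simp add: abs_minus_commute mult_left_mono)
  ultimately show ?thesis by linarith
qed

lemma UB:
  assumes up: "\<forall>n. \<exists>c\<in>K. n < hh c"
  shows "\<forall>L. \<exists>c\<in>K. hh c < L"
proof (rule ccontr)
  assume "\<not> (\<forall>L. \<exists>c\<in>K. hh c < L)"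
  then obtain L where Lb: "\<forall>c\<in>K. L \<le> hh c" by (auto simp: not_less)
  define L' where "L' = L - W - 1"
  define Z where "Z = max G (hh a + G - L')"
  define R where "R = nat (2 * int D + int \<tau> * Z)"
  have W0: "0 \<le> W" by (rule W_nonneg)
  have G0: "0 \<le> G" by (rule G_nonneg)
  have haL: "L \<le> hh a" using Lb a_K by blast
  have nearall: "\<exists>c\<in>K. dd y c \<le> R" if y: "y \<in> S" and ly: "L' \<le> hh y" for y
  proof (cases "hh a + G < hh y")
    case True
    obtain c2 where c2: "c2 \<in> K" "hh y + G < hh c2" using up by blast
    obtain c where c: "c \<in> K" "\<bar>hh c - hh y\<bar> \<le> G" using stepA[OF a_K c2(1), of "hh y"] True c2 by auto
    have "int (dd y c) \<le> 2 * int D + int \<tau> * G" using near_level[OF y c(1) c(2)] .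
    moreover have "int \<tau> * G \<le> int \<tau> * Z" unfolding Z_def by (simp add: mult_left_mono)
    ultimately have "dd y c \<le> R" unfolding R_def by linarith
    then show ?thesis using c by blast
  next
    case False
    have "\<bar>hh a - hh y\<bar> \<le> Z" unfolding Z_def using False ly haL W0 G0 unfolding L'_def by (simp add: abs_le_iff)
    then have "int (dd y a) \<le> 2 * int D + int \<tau> * Z" using near_level[OF y a_K] by blast
    then have "dd y a \<le> R" unfolding R_def by linarith
    then show ?thesis using a_K by blast
  qed
  obtain x where x: "x \<in> A" "\<forall>c\<in>K. Suc R \<le> dd x c" using deepA by blast
  obtain z where z: "z \<in> B" "\<forall>c\<in>K. Suc R \<le> dd z c" using deepB by blast
  have hx: "hh x < L'"
  proof (rule ccontr)
    assume "\<not> hh x < L'"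
    then obtain c where "c \<in> K" "dd x c \<le> R" using nearall[OF A_S[OF x(1)]] by auto
    then show False using x(2) by fastforce
  qed
  have hz: "hh z < L'"
  proof (rule ccontr)
    assume "\<not> hh z < L'"
    then obtain c where "c \<in> K" "dd z c \<le> R" using nearall[OF B_S[OF z(1)]] by auto
    then show False using z(2) by fastforce
  qed
  define i0 where "i0 = min (hh x) (hh z)"
  have h: "\<forall>c\<in>K. hh c < i0 - W \<or> (L' - 1) + W < hh c"
    using Lb unfolding L'_def by fastforce
  have "x \<in> A \<longleftrightarrow> Q i0 \<in> A" using band[OF h A_S[OF x(1)]] hx unfolding i0_def by simp
  moreover have "z \<in> A \<longleftrightarrow> Q i0 \<in> A" using band[OF h B_S[OF z(1)]] hz unfolding i0_def by simp
  ultimately show False using x(1) z(1) AB_disj by blast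
qed

lemma DB:
  assumes down: "\<forall>n. \<exists>c\<in>K. hh c < n"
  shows "\<forall>L. \<exists>c\<in>K. L < hh c"
proof -
  interpret mr: edge S E "\<lambda>j. Q (- j)" "\<lambda>y. - hh y" D \<tau> \<rho> a b by (rule mirror_edge)
  have "\<forall>n. \<exists>c\<in>K. n < - hh c"
  proof
    fix n obtain c where "c \<in> K" "hh c < - n" using down by blast
    then show "\<exists>c\<in>K. n < - hh c" by force
  qed
  then have *: "\<forall>L. \<exists>c\<in>K. - hh c < L" by (rule mr.UB)
  show ?thesis
  proof
    fix L obtain c where "c \<in> K" "- hh c < - L" using * by blast
    then show "\<exists>c\<in>K. L < hh c" by force
  qed
qed

lemma bounded: "\<exists>lo hi. \<forall>c\<in>K. lo \<le> hh c \<and> hh c \<le> hi"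
proof -
  have not_both: "\<not> ((\<forall>n. \<exists>c\<in>K. n < hh c) \<and> (\<forall>n. \<exists>c\<in>K. hh c < n))"
  proof
    assume both: "(\<forall>n. \<exists>c\<in>K. n < hh c) \<and> (\<forall>n. \<exists>c\<in>K. hh c < n)"
    define R where "R = nat (2 * int D + int \<tau> * G)"
    obtain x where x: "x \<in> A" "\<forall>c\<in>K. Suc R \<le> dd x c" using deepA by blast
    have xS: "x \<in> S" using A_S x by simp
    obtain c1 where c1: "c1 \<in> K" "hh c1 < hh x - G" using both by blast
    obtain c2 where c2: "c2 \<in> K" "hh x + G < hh c2" using both by blast
    obtain c where c: "c \<in> K" "\<bar>hh c - hh x\<bar> \<le> G" using stepA[OF c1(1) c2(1) c1(2) c2(2)] by blast
    have "int (dd x c) \<le> 2 * int D + int \<tau> * G" using near_level[OF xS c(1) c(2)] .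
    then have "dd x c \<le> R" unfolding R_def by linarith
    then show False using x(2) c(1) by fastforce
  qed
  have "\<not> (\<forall>n. \<exists>c\<in>K. n < hh c)" using not_both UB by blast
  then obtain hi where hi: "\<forall>c\<in>K. hh c \<le> hi" by (auto simp: not_less)
  have "\<not> (\<forall>n. \<exists>c\<in>K. hh c < n)" using not_both DB by blast
  then obtain lo where lo: "\<forall>c\<in>K. lo \<le> hh c" by (auto simp: not_less)
  show ?thesis using hi lo by blast
qed

lemma half_structure:
  "\<exists>C \<sigma>. (\<sigma> = 1 \<or> \<sigma> = -1) \<and> (\<forall>y\<in>A. - C \<le> \<sigma> * hh y) \<and> (\<forall>y\<in>B. \<sigma> * hh y \<le> C)"
proof -
  obtain lo hi where lh: "\<forall>c\<in>K. lo \<le> hh c \<and> hh c \<le> hi" using bounded by blast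
  have W0: "0 \<le> W" by (rule W_nonneg)
  define iR where "iR = hi + W + 1"
  define iL where "iL = lo - W - 1"
  have haa: "lo \<le> hh a" "hh a \<le> hi" using lh a_K by auto
  have right: "y \<in> A \<longleftrightarrow> Q iR \<in> A" if y: "y \<in> S" and l: "iR \<le> hh y" for y
  proof -
    have h: "\<forall>c\<in>K. hh c < iR - W \<or> hh y + W < hh c" using lh unfolding iR_def by fastforce
    show ?thesis using band[OF h y l] by simp
  qed
  have left: "y \<in> A \<longleftrightarrow> Q iL \<in> A" if y: "y \<in> S" and l: "hh y \<le> iL" for y
  proof -
    have h: "\<forall>c\<in>K. hh c < hh y - W \<or> iL + W < hh c" using lh unfolding iL_def by fastforce
    have "y \<in> A \<longleftrightarrow> Q (hh y) \<in> A" using band[OF h y _ l] by simp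
    moreover have "Q iL \<in> A \<longleftrightarrow> Q (hh y) \<in> A" using Q_chain[OF h _ order_refl] l by simp
    ultimately show ?thesis by simp
  qed
  define R where "R = nat (2 * int D + int \<tau> * (iR - iL))"
  have mid: "dd y a \<le> R" if y: "y \<in> S" and l: "iL < hh y" "hh y < iR" for y
  proof -
    have "\<bar>hh a - hh y\<bar> \<le> iR - iL" using l haa W0 unfolding iR_def iL_def by (simp add: abs_le_iff)
    then have "int (dd y a) \<le> 2 * int D + int \<tau> * (iR - iL)" using near_level[OF y a_K] by blast
    then show ?thesis unfolding R_def by linarith
  qed
  obtain x where x: "x \<in> A" "\<forall>c\<in>K. Suc R \<le> dd x c" using deepA by blast
  obtain z where z: "z \<in> B" "\<forall>c\<in>K. Suc R \<le> dd z c" using deepB by blast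
  have xS: "x \<in> S" and zS: "z \<in> S" using x z A_S B_S by auto
  have fx: "\<not> (iL < hh x \<and> hh x < iR)" using mid[OF xS] x(2) a_K by fastforce
  have fz: "\<not> (iL < hh z \<and> hh z < iR)" using mid[OF zS] z(2) a_K by fastforce
  have zA: "z \<notin> A" using z AB_disj by blast
  have s1: "Q iR \<in> A \<or> Q iL \<in> A"
  proof (cases "iR \<le> hh x")
    case True then show ?thesis using right[OF xS] x(1) by blast
  next
    case False then have "hh x \<le> iL" using fx by linarith
    then show ?thesis using left[OF xS] x(1) by blast
  qed
  have s2: "Q iR \<notin> A \<or> Q iL \<notin> A"
  proof (cases "iR \<le> hh z")
    case True then show ?thesis using right[OF zS] zA by blast
  next
    case False then have "hh z \<le> iL" using fz by linarith
    then show ?thesis using left[OF zS] zA by blast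
  qed
  define C where "C = \<bar>lo\<bar> + \<bar>hi\<bar> + W + 1"
  have CR: "iR \<le> C" "- C \<le> iL" unfolding C_def iR_def iL_def by auto
  show ?thesis
  proof (cases "Q iR \<in> A")
    case True
    then have nL: "Q iL \<notin> A" using s2 by blast
    have "\<forall>y\<in>A. - C \<le> 1 * hh y"
    proof
      fix y assume yA: "y \<in> A"
      have "\<not> hh y \<le> iL" using left[OF A_S[OF yA]] yA nL by blast
      then show "- C \<le> 1 * hh y" using CR by linarith
    qed
    moreover have "\<forall>y\<in>B. 1 * hh y \<le> C"
    proof
      fix y assume yB: "y \<in> B"
      then have "y \<notin> A" using AB_disj by blast
      then have "\<not> iR \<le> hh y" using right[OF B_S[OF yB]] True by blast
      then show "1 * hh y \<le> C" using CR by linarith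
    qed
    ultimately show ?thesis by blast
  next
    case False
    then have L: "Q iL \<in> A" using s1 by blast
    have "\<forall>y\<in>A. - C \<le> (-1) * hh y"
    proof
      fix y assume yA: "y \<in> A"
      have "\<not> iR \<le> hh y" using right[OF A_S[OF yA]] yA False by blast
      then show "- C \<le> (-1) * hh y" using CR by linarith
    qed
    moreover have "\<forall>y\<in>B. (-1) * hh y \<le> C"
    proof
      fix y assume yB: "y \<in> B"
      then have "y \<notin> A" using AB_disj by blast
      then have "\<not> hh y \<le> iL" using left[OF B_S[OF yB]] L by blast
      then show "(-1) * hh y \<le> C" using CR by linarith
    qed
    ultimately show ?thesis by blast
  qed
qed

end

context cgraph begin

lemma half_map:
  assumes g: "Yaut E S g" and a: "a \<in> S" and b: "b \<in> S" and x: "x \<in> halfspace S E a b"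
  shows "g x \<in> halfspace S E (g a) (g b)"
proof -
  have xS: "x \<in> S" and lt: "dd x a < dd x b" using x unfolding halfspace_def by auto
  have "dd (g x) (g a) = dd x a" "dd (g x) (g b) = dd x b" using Yaut_dist[OF g] xS a b by auto
  moreover have "g x \<in> S" using Yaut_mem[OF g] xS by simp
  ultimately show ?thesis using lt unfolding halfspace_def by simp
qed

lemma carrier_map:
  assumes g: "Yaut E S g" and a: "a \<in> S" and b: "b \<in> S" and c': "c' \<in> carrier S E (g a) (g b)"
  shows "\<exists>c\<in>carrier S E a b. c' = g c"
proof -
  obtain d' where d': "(c', d') \<in> dual_edges S E (g a) (g b)" using c' unfolding carrier_def by blast
  then have cS: "c' \<in> S" and dS: "d' \<in> S" and e: "E c' d'"
    and ne: "dd (g a) c' + dd (g b) d' \<noteq> dd (g a) d' + dd (g b) c'"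
    unfolding dual_edges_def by auto
  define c where "c = inv g c'"
  define d where "d = inv g d'"
  have gi: "Yaut E S (inv g)" by (rule Yaut_inv[OF g])
  have gc: "g c = c'" "g d = d'" unfolding c_def d_def using Yaut_f_inv[OF g] by auto
  have cS2: "c \<in> S" "d \<in> S" unfolding c_def d_def using Yaut_mem[OF gi] cS dS by auto
  have "E c d" using Yaut_E[OF g, of c d] gc e by simp
  moreover have "dd a c + dd b d \<noteq> dd a d + dd b c"
    using ne Yaut_dist[OF g] a b cS2 gc by metis
  ultimately have "(c, d) \<in> dual_edges S E a b" using cS2 unfolding dual_edges_def by simp
  then have "c \<in> carrier S E a b" unfolding carrier_def by blast
  then show ?thesis using gc by metis
qed

lemma ess_map:
  assumes g: "Yaut E S g" and a: "a \<in> S" and b: "b \<in> S" and ess: "essential S E a b"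
  shows "essential S E (g a) (g b)"
proof -
  have *: "deep S E (g u) (g v)" if u: "u \<in> S" and v: "v \<in> S" and dp: "deep S E u v" for u v
    unfolding deep_def
  proof
    fix R
    obtain x where x: "x \<in> halfspace S E u v" "\<forall>c\<in>carrier S E u v. R \<le> dd x c"
      using dp unfolding deep_def by blast
    have xS: "x \<in> S" using x unfolding halfspace_def by simp
    have "g x \<in> halfspace S E (g u) (g v)" by (rule half_map[OF g u v x(1)])
    moreover have "\<forall>c'\<in>carrier S E (g u) (g v). R \<le> dd (g x) c'"
    proof
      fix c' assume "c' \<in> carrier S E (g u) (g v)"
      then obtain c where c: "c \<in> carrier S E u v" "c' = g c" using carrier_map[OF g u v] by blast
      have cS: "c \<in> S" using c(1) unfolding carrier_def dual_edges_def by blast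
      show "R \<le> dd (g x) c'" using x(2) c Yaut_dist[OF g xS cS] by simp
    qed
    ultimately show "\<exists>x\<in>halfspace S E (g u) (g v). \<forall>c\<in>carrier S E (g u) (g v). R \<le> dd x c" by blast
  qed
  show ?thesis using ess *[OF a b] *[OF b a] unfolding essential_def by blast
qed

lemma list_cross:
  "hd xs \<in> P \<Longrightarrow> last xs \<notin> P \<Longrightarrow> xs \<noteq> [] \<Longrightarrow> \<exists>j. Suc j < length xs \<and> xs ! j \<in> P \<and> xs ! Suc j \<notin> P"
proof (induction xs)
  case Nil then show ?case by simp
next
  case (Cons x xs)
  show ?case
  proof (cases xs)
    case Nil then show ?thesis using Cons.prems by simp
  next
    case (Cons y ys)
    show ?thesis
    proof (cases "y \<in> P")
      case True
      then obtain j where "Suc j < length xs" "xs ! j \<in> P" "xs ! Suc j \<notin> P"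
        using Cons.IH Cons.prems \<open>xs = y # ys\<close> by auto
      then show ?thesis by (intro exI[of _ "Suc j"]) simp
    next
      case False
      then show ?thesis using Cons.prems \<open>xs = y # ys\<close> by (intro exI[of _ 0]) simp
    qed
  qed
qed

lemma walk_cross:
  assumes w: "walk_in S E xs" and a: "a \<in> S" and b: "b \<in> S"
    and h: "hd xs \<in> halfspace S E a b" and l: "last xs \<notin> halfspace S E a b"
  shows "\<exists>j. Suc j < length xs \<and> (xs ! j, xs ! Suc j) \<in> dual_edges S E a b"
proof -
  obtain j where j: "Suc j < length xs" "xs ! j \<in> halfspace S E a b" "xs ! Suc j \<notin> halfspace S E a b"
    using list_cross[OF h l walk_nonempty[OF w]] by blast
  have cS: "xs ! j \<in> S" and dS: "xs ! Suc j \<in> S" using walk_set[OF w] j(1) by auto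
  have e: "E (xs ! j) (xs ! Suc j)" using walk_step[OF w j(1)] .
  have lt: "dd (xs ! j) a < dd (xs ! j) b" using j(2) unfolding halfspace_def by simp
  have ge: "\<not> dd (xs ! Suc j) a < dd (xs ! Suc j) b" using j(3) dS unfolding halfspace_def by simp
  have s: "dd a (xs ! j) = dd (xs ! j) a" "dd b (xs ! j) = dd (xs ! j) b"
    "dd a (xs ! Suc j) = dd (xs ! Suc j) a" "dd b (xs ! Suc j) = dd (xs ! Suc j) b"
    using gdist_sym a b cS dS by auto
  have "dd a (xs ! j) + dd b (xs ! Suc j) \<noteq> dd a (xs ! Suc j) + dd b (xs ! j)"
    unfolding s using lt ge by linarith
  then show ?thesis using j(1) cS dS e unfolding dual_edges_def by blast
qed

end


lemma sum_abs_bound: "finite A \<Longrightarrow> x \<in> A \<Longrightarrow> \<bar>f x\<bar> \<le> (\<Sum>y\<in>A. \<bar>f y :: int\<bar>)"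
  by (rule member_le_sum) auto

lemma sum_nat_bound: "finite A \<Longrightarrow> x \<in> A \<Longrightarrow> f x \<le> (\<Sum>y\<in>A. f y :: nat)"
  by (rule member_le_sum) auto

locale main_ctx =
  fixes E :: "'v \<Rightarrow> 'v \<Rightarrow> bool" and G :: "('v \<Rightarrow> 'v) set" and Y :: "'v set" and \<phi> :: "'v \<Rightarrow> 'v"
  assumes med: "median_graph E" and lf: "locally_finite E" and fcg: "free_cocompact_group E G"
    and ql: "quasiline E G Y \<phi>"
begin

lemma cvx: "convex_set E Y" using ql unfolding quasiline_def by blast

sublocale cgraph Y E by (rule Y_cgraph[OF med cvx])

lemma phi_aut: "Yaut E Y \<phi>"
  using ql fcg unfolding quasiline_def free_cocompact_group_def Yaut_def by blast

lemma bij_phi: "bij \<phi>" using phi_aut unfolding Yaut_def graph_aut_def by blast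

abbreviation "T \<equiv> fpow \<phi>"

lemma T_aut: "Yaut E Y (T k)" by (rule fpow_Yaut[OF phi_aut])

lemma T_in: "x \<in> Y \<Longrightarrow> T k x \<in> Y" using Yaut_mem[OF T_aut] by simp

lemma T_dist: "x \<in> Y \<Longrightarrow> y \<in> Y \<Longrightarrow> dd (T k x) (T k y) = dd x y"
  by (rule Yaut_dist[OF T_aut])

lemma T_add: "T i (T j x) = T (i + j) x" by (rule fpow_apply_add[OF bij_phi])

lemma T_0: "T 0 x = x" by (simp add: fpow_0)

lemma F_ex: "\<exists>F. finite F \<and> F \<subseteq> Y \<and> Y \<subseteq> (\<Union>k::int. T k ` F)"
  using ql unfolding quasiline_def by blast

definition "FF = (SOME F. finite F \<and> F \<subseteq> Y \<and> Y \<subseteq> (\<Union>k::int. T k ` F))"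

lemma FF: "finite FF" "FF \<subseteq> Y" "Y \<subseteq> (\<Union>k::int. T k ` FF)"
  using someI_ex[OF F_ex] unfolding FF_def by blast+

definition "p0 = (SOME p. p \<in> Y)"

lemma p0: "p0 \<in> Y" using ql someI_ex[of "\<lambda>p. p \<in> Y"] unfolding p0_def quasiline_def by blast

definition "DD = (\<Sum>f\<in>FF. dd f p0)"
definition "QQ j = T j p0"

lemma QQ_in: "QQ j \<in> Y" unfolding QQ_def using T_in p0 by blast

lemma cover: "y \<in> Y \<Longrightarrow> \<exists>k f. f \<in> FF \<and> y = T k f" using FF(3) by blast

lemma near_ex: assumes y: "y \<in> Y" shows "\<exists>j. dd y (QQ j) \<le> DD"
proof -
  obtain k f where f: "f \<in> FF" "y = T k f" using cover[OF y] by blast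
  have fY: "f \<in> Y" using f FF(2) by blast
  have "dd y (QQ k) = dd f p0" unfolding QQ_def f(2) using T_dist fY p0 by blast
  also have "\<dots> \<le> DD" unfolding DD_def by (rule sum_nat_bound[OF FF(1) f(1)])
  finally show ?thesis by blast
qed

definition "hq y = (SOME j. dd y (QQ j) \<le> DD)"

lemma hq_near: "y \<in> Y \<Longrightarrow> dd y (QQ (hq y)) \<le> DD"
  unfolding hq_def using someI_ex[OF near_ex] by blast

definition "tau = dd p0 (T 1 p0)"

lemma stepQQ: "dd (QQ j) (QQ (j + 1)) \<le> tau"
proof -
  have "QQ (j + 1) = T j (T 1 p0)" unfolding QQ_def using T_add by simp
  then have "dd (QQ j) (QQ (j + 1)) = dd p0 (T 1 p0)" unfolding QQ_def using T_dist p0 T_in by simp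
  then show ?thesis unfolding tau_def by simp
qed

lemma T_QQ: "T s (QQ j) = QQ (s + j)" unfolding QQ_def using T_add by simp

end

locale main_ess = main_ctx +
  fixes a0 b0
  assumes a0: "a0 \<in> Y" and b0: "b0 \<in> Y" and e0: "E a0 b0" and ess0: "essential Y E a0 b0"
begin

lemma a0_K: "a0 \<in> carrier Y E a0 b0"
proof -
  have "a0 \<noteq> b0" using e0 med unfolding median_graph_def by blast
  then have "dd a0 b0 \<noteq> 0" "dd b0 a0 \<noteq> 0" using gdist_eq0 a0 b0 by metis+
  then have "(a0, b0) \<in> dual_edges Y E a0 b0"
    unfolding dual_edges_def using a0 b0 e0 gdist_refl[OF a0] gdist_refl[OF b0] by simp
  then show ?thesis unfolding carrier_def by blast
qed

lemma unbounded: "\<exists>x\<in>Y. R \<le> dd x a0"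
proof -
  obtain x where "x \<in> halfspace Y E a0 b0" "\<forall>c\<in>carrier Y E a0 b0. R \<le> dd x c"
    using ess0 unfolding essential_def deep_def by blast
  then show ?thesis using a0_K unfolding halfspace_def by blast
qed

lemma no_period:
  assumes n: "0 < n" and per0: "QQ n = p0"
  shows False
proof -
  have per: "QQ (j + n) = QQ j" for j
  proof -
    have "QQ (j + n) = T j (QQ n)" using T_QQ by simp
    then show ?thesis using per0 unfolding QQ_def by simp
  qed
  have perq: "QQ (r + n * q) = QQ r" for q r
  proof (induction q rule: int_induct[where k = 0])
    case base then show ?case by simp
  next
    case (step1 q)
    have "QQ (r + n * (q + 1)) = QQ ((r + n * q) + n)" by (simp add: algebra_simps)
    then show ?case using per step1 by simp
  next
    case (step2 q)
    have "QQ (r + n * (q - 1)) = QQ ((r + n * (q - 1)) + n)" using per by simp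
    also have "(r + n * (q - 1)) + n = r + n * q" by (simp add: algebra_simps)
    finally show ?case using step2 by simp
  qed
  have red: "QQ j = QQ (j mod n)" for j
    using perq[of "j mod n" "j div n"] by (simp add: mod_mult_div_eq)
  define S0 where "S0 = (\<Sum>i\<in>{0..<n}. dd (QQ i) p0)"
  define RR where "RR = DD + S0 + dd p0 a0"
  obtain x where x: "x \<in> Y" "Suc RR \<le> dd x a0" using unbounded by blast
  have "dd x a0 \<le> dd x (QQ (hq x)) + dd (QQ (hq x)) a0" using gdist_triangle x(1) QQ_in a0 by blast
  moreover have "dd (QQ (hq x)) a0 \<le> dd (QQ (hq x)) p0 + dd p0 a0" using gdist_triangle QQ_in p0 a0 by blast
  moreover have "dd (QQ (hq x)) p0 \<le> S0"
  proof -
    have "hq x mod n \<in> {0..<n}" using n by simp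
    then have "dd (QQ (hq x mod n)) p0 \<le> S0" unfolding S0_def by (rule sum_nat_bound[rotated]) simp
    then show ?thesis using red by metis
  qed
  moreover have "dd x (QQ (hq x)) \<le> DD" by (rule hq_near[OF x(1)])
  ultimately show False using x(2) unfolding RR_def by linarith
qed

lemma QQ_inj: assumes "QQ i = QQ j" shows "i = j"
proof (rule ccontr)
  assume ne: "i \<noteq> j"
  have "QQ (- j + i) = T (- j) (QQ i)" using T_QQ by simp
  also have "\<dots> = T (- j) (QQ j)" using assms by simp
  also have "\<dots> = p0" using T_QQ QQ_def T_0 by simp
  finally have 1: "QQ (i - j) = p0" by simp
  have "QQ (- i + j) = T (- i) (QQ j)" using T_QQ by simp
  also have "\<dots> = T (- i) (QQ i)" using assms by simp
  also have "\<dots> = p0" using T_QQ QQ_def T_0 by simp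
  finally have 2: "QQ (j - i) = p0" by simp
  show False
  proof (cases "i < j")
    case True then show False using no_period[of "j - i"] 2 by simp
  next
    case False then show False using no_period[of "i - j"] 1 ne by simp
  qed
qed

lemma ball_fin: "finite {m. dd p0 (QQ m) \<le> r}"
proof -
  have lf': "\<And>x. finite {y. E x y}" using lf unfolding locally_finite_def by blast
  have "QQ ` {m. dd p0 (QQ m) \<le> r} \<subseteq> {y \<in> Y. dd p0 y \<le> r}" using QQ_in by blast
  then have "finite (QQ ` {m. dd p0 (QQ m) \<le> r})" using ball_finite[OF lf' p0] finite_subset by blast
  moreover have "inj_on QQ {m. dd p0 (QQ m) \<le> r}" using QQ_inj unfolding inj_on_def by blast
  ultimately show ?thesis by (rule finite_imageD)
qed

definition "rho r = (\<Sum>m\<in>{m. dd p0 (QQ m) \<le> r}. \<bar>m\<bar>)"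

lemma rho_bound: "dd p0 (QQ m) \<le> r \<Longrightarrow> \<bar>m\<bar> \<le> rho r"
  unfolding rho_def by (rule sum_abs_bound[OF ball_fin]) simp

lemma proper_QQ: assumes "dd (QQ i) (QQ j) \<le> r" shows "\<bar>i - j\<bar> \<le> rho r"
proof -
  have "T (- i) (QQ i) = p0" "T (- i) (QQ j) = QQ (j - i)" using T_QQ QQ_def T_0 by simp_all
  then have "dd p0 (QQ (j - i)) = dd (QQ i) (QQ j)" using T_dist QQ_in by metis
  then have "\<bar>j - i\<bar> \<le> rho r" using rho_bound assms by simp
  then show ?thesis by simp
qed

sublocale coarse Y E QQ hq DD tau rho
proof
  show "QQ j \<in> Y" for j by (rule QQ_in)
  show "y \<in> Y \<Longrightarrow> dd y (QQ (hq y)) \<le> DD" for y by (rule hq_near)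
  show "dd (QQ j) (QQ (j + 1)) \<le> tau" for j by (rule stepQQ)
  show "dd (QQ i) (QQ j) \<le> r \<Longrightarrow> \<bar>i - j\<bar> \<le> rho r" for i j r by (rule proper_QQ)
qed

lemma edge_of:
  assumes a: "a \<in> Y" and b: "b \<in> Y" and e: "E a b" and es: "essential Y E a b"
  shows "edge Y E QQ hq DD tau rho a b"
proof (rule edge.intro[OF coarse_axioms edge_axioms.intro])
  show "a \<in> Y" "b \<in> Y" "E a b" "essential Y E a b" using assms by auto
  show "dd x b = dd x a + 1 \<or> dd x a = dd x b + 1" if "x \<in> Y" for x
    using median_side[OF med cvx a b that e] .
qed

lemma hq_shift: assumes y: "y \<in> Y" shows "\<bar>hq (T s y) - (hq y + s)\<bar> \<le> rho (2 * DD)"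
proof -
  have Ty: "T s y \<in> Y" using T_in y by blast
  have "QQ (hq y + s) = T s (QQ (hq y))" using T_QQ by (simp add: add.commute)
  then have "dd (T s y) (QQ (hq y + s)) = dd y (QQ (hq y))" using T_dist y QQ_in by simp
  then have d1: "dd (T s y) (QQ (hq y + s)) \<le> DD" using hq_near[OF y] by simp
  have d2: "dd (QQ (hq (T s y))) (T s y) \<le> DD" using hq_near[OF Ty] gdist_sym[OF Ty QQ_in] by simp
  have "dd (QQ (hq (T s y))) (QQ (hq y + s)) \<le> dd (QQ (hq (T s y))) (T s y) + dd (T s y) (QQ (hq y + s))"
    using gdist_triangle QQ_in Ty by blast
  then have "dd (QQ (hq (T s y))) (QQ (hq y + s)) \<le> 2 * DD" using d1 d2 by linarith
  then show ?thesis by (rule proper_QQ)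
qed

definition "Rep = {(f, c). f \<in> FF \<and> c \<in> Y \<and> E f c \<and> essential Y E f c}"

lemma Rep_fin: "finite Rep"
proof -
  have "Rep \<subseteq> Sigma FF (\<lambda>f. {c. E f c})" unfolding Rep_def by blast
  moreover have "finite (Sigma FF (\<lambda>f. {c. E f c}))"
    using FF(1) lf unfolding locally_finite_def by (intro finite_SigmaI) auto
  ultimately show ?thesis using finite_subset by blast
qed

lemma rep_struct: "\<exists>Cf \<sigma>f. \<forall>r\<in>Rep. (\<sigma>f r = 1 \<or> \<sigma>f r = -1) \<and>
   (\<forall>y\<in>halfspace Y E (fst r) (snd r). - Cf r \<le> \<sigma>f r * hq y) \<and>
   (\<forall>y\<in>halfspace Y E (snd r) (fst r). \<sigma>f r * hq y \<le> Cf r)"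
proof -
  have "\<forall>r\<in>Rep. \<exists>p. (snd p = 1 \<or> snd p = -1) \<and>
   (\<forall>y\<in>halfspace Y E (fst r) (snd r). - fst p \<le> snd p * hq y) \<and>
   (\<forall>y\<in>halfspace Y E (snd r) (fst r). snd p * hq y \<le> fst p)"
  proof
    fix r assume r: "r \<in> Rep"
    then have "fst r \<in> Y" "snd r \<in> Y" "E (fst r) (snd r)" "essential Y E (fst r) (snd r)"
      unfolding Rep_def using FF(2) by auto
    then interpret ed: edge Y E QQ hq DD tau rho "fst r" "snd r" by (rule edge_of)
    obtain C \<sigma> where "(\<sigma> = 1 \<or> \<sigma> = -1)" "\<forall>y\<in>halfspace Y E (fst r) (snd r). - C \<le> \<sigma> * hq y"
      "\<forall>y\<in>halfspace Y E (snd r) (fst r). \<sigma> * hq y \<le> C" using ed.half_structure by blast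
    then show "\<exists>p. (snd p = 1 \<or> snd p = -1) \<and>
     (\<forall>y\<in>halfspace Y E (fst r) (snd r). - fst p \<le> snd p * hq y) \<and>
     (\<forall>y\<in>halfspace Y E (snd r) (fst r). snd p * hq y \<le> fst p)" by (intro exI[of _ "(C, \<sigma>)"]) simp
  qed
  then obtain pf where pf: "\<forall>r\<in>Rep. (snd (pf r) = 1 \<or> snd (pf r) = -1) \<and>
   (\<forall>y\<in>halfspace Y E (fst r) (snd r). - fst (pf r) \<le> snd (pf r) * hq y) \<and>
   (\<forall>y\<in>halfspace Y E (snd r) (fst r). snd (pf r) * hq y \<le> fst (pf r))" by (rule bchoice[elim_format]) blast
  show ?thesis by (rule exI[of _ "\<lambda>r. fst (pf r)"], rule exI[of _ "\<lambda>r. snd (pf r)"]) (use pf in blast)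
qed

lemma sig_bound: "\<sigma> = 1 \<or> \<sigma> = -1 \<Longrightarrow> \<bar>w\<bar> \<le> r \<Longrightarrow> - r \<le> \<sigma> * w \<and> \<sigma> * w \<le> (r::int)"
  by (auto simp: abs_le_iff)

lemma centered: "\<exists>C'. 0 \<le> C' \<and> (\<forall>a b. a \<in> Y \<and> b \<in> Y \<and> E a b \<and> essential Y E a b \<longrightarrow>
   (\<exists>\<sigma> j. (\<sigma> = 1 \<or> \<sigma> = -1) \<and> (\<forall>y\<in>halfspace Y E a b. - C' \<le> \<sigma> * (hq y - j)) \<and>
      (\<forall>y\<in>halfspace Y E b a. \<sigma> * (hq y - j) \<le> C')))"
proof -
  obtain Cf \<sigma>f where rs: "\<forall>r\<in>Rep. (\<sigma>f r = 1 \<or> \<sigma>f r = -1) \<and>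
   (\<forall>y\<in>halfspace Y E (fst r) (snd r). - Cf r \<le> \<sigma>f r * hq y) \<and>
   (\<forall>y\<in>halfspace Y E (snd r) (fst r). \<sigma>f r * hq y \<le> Cf r)" using rep_struct by blast
  define Cs where "Cs = (\<Sum>r\<in>Rep. \<bar>Cf r\<bar>)"
  define C' where "C' = Cs + rho (2 * DD)"
  have C'0: "0 \<le> C'" unfolding C'_def Cs_def using rho_nonneg by (simp add: sum_nonneg)
  have main: "\<exists>\<sigma> j. (\<sigma> = 1 \<or> \<sigma> = -1) \<and> (\<forall>y\<in>halfspace Y E a b. - C' \<le> \<sigma> * (hq y - j)) \<and>
      (\<forall>y\<in>halfspace Y E b a. \<sigma> * (hq y - j) \<le> C')"
    if a: "a \<in> Y" and b: "b \<in> Y" and e: "E a b" and es: "essential Y E a b" for a b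
  proof -
    obtain j f where f: "f \<in> FF" "a = T j f" using cover[OF a] by blast
    define g where "g = T (- j)"
    have g: "Yaut E Y g" unfolding g_def by (rule T_aut)
    have ga: "g a = f" unfolding g_def f(2) by (rule fpow_cancel[OF bij_phi])
    define c where "c = g b"
    have cY: "c \<in> Y" unfolding c_def using Yaut_mem[OF g] b by simp
    have efc: "E f c" unfolding c_def using Yaut_E[OF g] e ga by metis
    have esc: "essential Y E f c" unfolding c_def using ess_map[OF g a b es] ga by simp
    have r: "(f, c) \<in> Rep" unfolding Rep_def using f(1) cY efc esc by simp
    define \<sigma> where "\<sigma> = \<sigma>f (f, c)"
    have \<sigma>: "\<sigma> = 1 \<or> \<sigma> = -1" using rs r unfolding \<sigma>_def by auto
    have CC: "Cf (f, c) \<le> Cs" unfolding Cs_def using sum_abs_bound[OF Rep_fin r, of Cf] by linarith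
    have sh: "- rho (2 * DD) \<le> \<sigma> * (hq y - j) - \<sigma> * hq (g y) \<and> \<sigma> * (hq y - j) - \<sigma> * hq (g y) \<le> rho (2 * DD)"
      if y: "y \<in> Y" for y
    proof -
      have "\<bar>hq (g y) - (hq y + - j)\<bar> \<le> rho (2 * DD)" unfolding g_def by (rule hq_shift[OF y])
      then have "\<bar>(hq y - j) - hq (g y)\<bar> \<le> rho (2 * DD)" by (simp add: abs_minus_commute)
      then have "- rho (2 * DD) \<le> \<sigma> * ((hq y - j) - hq (g y)) \<and> \<sigma> * ((hq y - j) - hq (g y)) \<le> rho (2 * DD)"
        by (rule sig_bound[OF \<sigma>])
      then show ?thesis by (simp add: algebra_simps)
    qed
    have "\<forall>y\<in>halfspace Y E a b. - C' \<le> \<sigma> * (hq y - j)"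
    proof
      fix y assume y: "y \<in> halfspace Y E a b"
      have yY: "y \<in> Y" using y unfolding halfspace_def by simp
      have "g y \<in> halfspace Y E f c" using half_map[OF g a b y] ga c_def by simp
      then have "- Cf (f, c) \<le> \<sigma> * hq (g y)" using rs r unfolding \<sigma>_def by auto
      then show "- C' \<le> \<sigma> * (hq y - j)" using sh[OF yY] CC unfolding C'_def by linarith
    qed
    moreover have "\<forall>y\<in>halfspace Y E b a. \<sigma> * (hq y - j) \<le> C'"
    proof
      fix y assume y: "y \<in> halfspace Y E b a"
      have yY: "y \<in> Y" using y unfolding halfspace_def by simp
      have "g y \<in> halfspace Y E c f" using half_map[OF g b a y] ga c_def by simp
      then have "\<sigma> * hq (g y) \<le> Cf (f, c)" using rs r unfolding \<sigma>_def by auto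
      then show "\<sigma> * (hq y - j) \<le> C'" using sh[OF yY] CC unfolding C'_def by linarith
    qed
    ultimately show ?thesis using \<sigma> by blast
  qed
  show ?thesis using C'0 main by blast
qed

end

lemma sig_s: "\<sigma> = 1 \<or> \<sigma> = -1 \<Longrightarrow> s \<in> {int k, - int k} \<Longrightarrow> \<sigma> * s \<le> int k \<and> - int k \<le> \<sigma> * s"
  by auto

lemma sig_abs: "\<sigma> = 1 \<or> \<sigma> = -1 \<Longrightarrow> \<bar>\<sigma> * w\<bar> = \<bar>w :: int\<bar>"
  by auto

lemma k_mono: "0 \<le> X \<Longrightarrow> 1 \<le> k \<Longrightarrow> X \<le> k * (X :: int)"
  using mult_right_mono[of 1 k X] by simp

context main_ess begin

lemma irr_ne: "E a b \<Longrightarrow> a \<noteq> b"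
  using med unfolding median_graph_def by blast

lemma edge_sides:
  assumes a: "a \<in> Y" and b: "b \<in> Y" and e: "E a b"
  shows "a \<in> halfspace Y E a b" "b \<in> halfspace Y E b a"
proof -
  have "dd a b \<noteq> 0" using gdist_eq0[OF a b] irr_ne[OF e] by blast
  moreover have "dd b a \<noteq> 0" using gdist_eq0[OF b a] irr_ne[OF e] by metis
  ultimately show "a \<in> halfspace Y E a b" "b \<in> halfspace Y E b a"
    unfolding halfspace_def using a b gdist_refl[OF a] gdist_refl[OF b] by auto
qed

lemma part1:
  assumes C0: "0 \<le> C'" and a: "a \<in> Y" and b: "b \<in> Y" and \<sigma>: "\<sigma> = 1 \<or> \<sigma> = -1"
    and hA: "\<forall>y\<in>halfspace Y E a b. - C' \<le> \<sigma> * (hq y - j)"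
    and hB: "\<forall>y\<in>halfspace Y E b a. \<sigma> * (hq y - j) \<le> C'"
    and k: "0 < k" and s: "s \<in> {int k, - int k}"
    and x: "x \<in> halfspace Y E a b \<inter> T s ` halfspace Y E b a"
    and y: "y \<in> halfspace Y E a b \<inter> T s ` halfspace Y E b a"
  shows "int (dd x y) \<le> int k * (2 * int DD + int tau * (2 * C' + rho (2 * DD) + 1))"
proof -
  let ?r0 = "rho (2 * DD)"
  have bnd: "- C' \<le> \<sigma> * (hq u - j) \<and> \<sigma> * (hq u - j) \<le> C' + int k + ?r0"
    if u: "u \<in> halfspace Y E a b \<inter> T s ` halfspace Y E b a" for u
  proof -
    obtain z where z: "z \<in> halfspace Y E b a" "u = T s z" using u by blast
    have zY: "z \<in> Y" using z unfolding halfspace_def by simp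
    have "\<bar>hq u - (hq z + s)\<bar> \<le> ?r0" unfolding z(2) by (rule hq_shift[OF zY])
    then have "\<bar>hq u - hq z - s\<bar> \<le> ?r0" by (simp add: algebra_simps)
    then have t1: "\<sigma> * (hq u - hq z - s) \<le> ?r0" using sig_bound[OF \<sigma>] by blast
    have t2: "\<sigma> * s \<le> int k" using sig_s[OF \<sigma> s] by blast
    have t3: "\<sigma> * (hq z - j) \<le> C'" using hB z(1) by blast
    have eq: "\<sigma> * (hq u - j) = \<sigma> * (hq z - j) + \<sigma> * (hq u - hq z - s) + \<sigma> * s" by (simp add: algebra_simps)
    have "- C' \<le> \<sigma> * (hq u - j)" using hA u by blast
    then show ?thesis using eq t1 t2 t3 by linarith
  qed
  have xY: "x \<in> Y" and yY: "y \<in> Y" using x y unfolding halfspace_def by auto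
  have "\<bar>hq x - hq y\<bar> = \<bar>\<sigma> * (hq x - j) - \<sigma> * (hq y - j)\<bar>"
    using sig_abs[OF \<sigma>, of "hq x - hq y"] by (simp add: algebra_simps)
  also have "\<dots> \<le> 2 * C' + int k + ?r0" using bnd[OF x] bnd[OF y] by (simp add: abs_le_iff)
  finally have hd: "\<bar>hq x - hq y\<bar> \<le> 2 * C' + int k + ?r0" .
  have "int (dd x y) \<le> 2 * int DD + int tau * \<bar>hq x - hq y\<bar>" by (rule lipschitz[OF xY yY])
  also have "\<dots> \<le> 2 * int DD + int tau * (2 * C' + int k + ?r0)" using hd by (simp add: mult_left_mono)
  also have "\<dots> = (2 * int DD + int tau * (2 * C' + ?r0)) + int tau * int k" by (simp add: algebra_simps)
  also have "\<dots> \<le> int k * (2 * int DD + int tau * (2 * C' + ?r0)) + int tau * int k"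
    using k_mono[of "2 * int DD + int tau * (2 * C' + ?r0)" "int k"] k C0 rho_nonneg by simp
  also have "\<dots> = int k * (2 * int DD + int tau * (2 * C' + ?r0 + 1))" by (simp add: algebra_simps)
  finally show ?thesis .
qed

lemma part2:
  assumes C0: "0 \<le> C'" and \<sigma>: "\<sigma> = 1 \<or> \<sigma> = -1"
    and geo: "geodesic_in Y E \<gamma>" and i: "Suc i < length \<gamma>"
    and hA: "\<forall>y\<in>halfspace Y E (\<gamma> ! i) (\<gamma> ! Suc i). - C' \<le> \<sigma> * (hq y - j)"
    and hB: "\<forall>y\<in>halfspace Y E (\<gamma> ! Suc i) (\<gamma> ! i). \<sigma> * (hq y - j) \<le> C'"
    and k: "0 < k" and s: "s \<in> {int k, - int k}"
    and hp: "int k * (2 * int DD + int tau * (2 * C' + rho (2 * DD) + rho (2 * DD + 1) + 1) + 1) \<le> int (dd (hd \<gamma>) (\<gamma> ! i))"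
    and hq': "int k * (2 * int DD + int tau * (2 * C' + rho (2 * DD) + rho (2 * DD + 1) + 1) + 1) \<le> int (dd (last \<gamma>) (\<gamma> ! i))"
  shows "\<exists>j'. Suc j' < length \<gamma> \<and> (\<gamma> ! j', \<gamma> ! Suc j') \<in> dual_edges Y E (T s (\<gamma> ! i)) (T s (\<gamma> ! Suc i))"
proof -
  let ?r0 = "rho (2 * DD)" and ?r1 = "rho (2 * DD + 1)"
  define a where "a = \<gamma> ! i"
  define b where "b = \<gamma> ! Suc i"
  define L where "L = 2 * C' + ?r0 + ?r1"
  define M where "M = 2 * int DD + int tau * (L + 1) + 1"
  have hpM: "int k * M \<le> int (dd (hd \<gamma>) a)" using hp unfolding M_def L_def a_def by (simp add: algebra_simps)
  have hqM: "int k * M \<le> int (dd (last \<gamma>) a)" using hq' unfolding M_def L_def a_def by (simp add: algebra_simps)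
  have w: "walk_in Y E \<gamma>" using geo unfolding geodesic_in_def by blast
  have ne: "\<gamma> \<noteq> []" using walk_nonempty[OF w] .
  have len: "length \<gamma> = Suc (dd (hd \<gamma>) (last \<gamma>))" using geo ne unfolding geodesic_in_def by (cases \<gamma>) auto
  have aY: "a \<in> Y" and bY: "b \<in> Y" using walk_set[OF w] i unfolding a_def b_def by auto
  have e: "E a b" using walk_step[OF w i] unfolding a_def b_def .
  define p where "p = hd \<gamma>"
  define q where "q = last \<gamma>"
  have pY: "p \<in> Y" and qY: "q \<in> Y" using walk_set[OF w] ne unfolding p_def q_def by auto
  have i': "i < length \<gamma>" using i by simp
  have d1: "dd p a = i" "dd a q = length \<gamma> - 1 - i" using shortest_nth[OF w len i'] unfolding p_def q_def a_def by auto
  have d2: "dd p b = Suc i" "dd b q = length \<gamma> - 1 - Suc i" using shortest_nth[OF w len i] unfolding p_def q_def b_def by auto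
  have pA: "p \<in> halfspace Y E a b" unfolding halfspace_def using pY d1 d2 by simp
  have qB: "q \<in> halfspace Y E b a"
  proof -
    have "dd q a = dd a q" "dd q b = dd b q" using gdist_sym aY bY qY by auto
    then show ?thesis unfolding halfspace_def using qY d1 d2 i by simp
  qed
  have aA: "a \<in> halfspace Y E a b" and bB: "b \<in> halfspace Y E b a" using edge_sides[OF aY bY e] by auto
  have ga: "- C' \<le> \<sigma> * (hq a - j)" using hA aA unfolding a_def b_def by blast
  have gb: "\<sigma> * (hq b - j) \<le> C'" using hB bB unfolding a_def b_def by blast
  have gp: "- C' \<le> \<sigma> * (hq p - j)" using hA pA unfolding a_def b_def by blast
  have gq: "\<sigma> * (hq q - j) \<le> C'" using hB qB unfolding a_def b_def by blast
  have "\<bar>hq a - hq b\<bar> \<le> ?r1" using adj_cont[OF aY bY e] unfolding \<rho>1_def .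
  moreover have "\<bar>hq a - hq b\<bar> = \<bar>\<sigma> * (hq a - j) - \<sigma> * (hq b - j)\<bar>"
    using sig_abs[OF \<sigma>, of "hq a - hq b"] by (simp add: algebra_simps)
  ultimately have gab: "\<sigma> * (hq a - j) \<le> C' + ?r1" using gb by (simp add: abs_le_iff)
  have r0: "0 \<le> ?r0" and r1: "0 \<le> ?r1" using rho_nonneg by auto
  have far: "\<not> \<bar>hq u - hq a\<bar> \<le> int k + L" if u: "u \<in> Y" and hu: "int k * M \<le> int (dd u a)" for u
  proof
    assume h: "\<bar>hq u - hq a\<bar> \<le> int k + L"
    have "int (dd u a) \<le> 2 * int DD + int tau * \<bar>hq u - hq a\<bar>" by (rule lipschitz[OF u aY])
    also have "\<dots> \<le> 2 * int DD + int tau * (int k + L)" using h by (simp add: mult_left_mono)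
    also have "\<dots> = (2 * int DD + int tau * L) + int tau * int k" by (simp add: algebra_simps)
    also have "\<dots> < int k * (2 * int DD + int tau * L) + int tau * int k + int k"
      using k_mono[of "2 * int DD + int tau * L" "int k"] k C0 r0 r1 unfolding L_def by simp
    also have "\<dots> = int k * M" unfolding M_def by (simp add: algebra_simps)
    finally show False using hu by simp
  qed
  have dqa: "dd q a = dd (last \<gamma>) a" unfolding q_def by simp
  have c1: "C' + int k + ?r0 < \<sigma> * (hq p - j)"
  proof (rule ccontr)
    assume "\<not> C' + int k + ?r0 < \<sigma> * (hq p - j)"
    then have u1: "\<sigma> * (hq p - j) - \<sigma> * (hq a - j) \<le> int k + L" using ga r1 unfolding L_def by linarith
    have u2: "- (\<sigma> * (hq p - j) - \<sigma> * (hq a - j)) \<le> int k + L" using gab gp r0 unfolding L_def by linarith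
    have "\<bar>\<sigma> * (hq p - j) - \<sigma> * (hq a - j)\<bar> \<le> int k + L" by (rule abs_leI[OF u1 u2])
    moreover have "\<bar>hq p - hq a\<bar> = \<bar>\<sigma> * (hq p - j) - \<sigma> * (hq a - j)\<bar>"
      using sig_abs[OF \<sigma>, of "hq p - hq a"] by (simp add: algebra_simps)
    ultimately show False using far[OF pY] hpM unfolding p_def by simp
  qed
  have c2: "\<sigma> * (hq q - j) < - C' - int k - ?r0"
  proof (rule ccontr)
    assume "\<not> \<sigma> * (hq q - j) < - C' - int k - ?r0"
    then have u1: "- (\<sigma> * (hq q - j) - \<sigma> * (hq a - j)) \<le> int k + L" using gab r1 unfolding L_def by linarith
    have u2: "\<sigma> * (hq q - j) - \<sigma> * (hq a - j) \<le> int k + L" using ga gq r0 r1 unfolding L_def by linarith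
    have "\<bar>\<sigma> * (hq q - j) - \<sigma> * (hq a - j)\<bar> \<le> int k + L" by (rule abs_leI[OF u2 u1])
    moreover have "\<bar>hq q - hq a\<bar> = \<bar>\<sigma> * (hq q - j) - \<sigma> * (hq a - j)\<bar>"
      using sig_abs[OF \<sigma>, of "hq q - hq a"] by (simp add: algebra_simps)
    ultimately show False using far[OF qY] hqM dqa by simp
  qed
  have ss: "\<sigma> * s \<le> int k \<and> - int k \<le> \<sigma> * s" using sig_s[OF \<sigma> s] .
  have shift: "- ?r0 \<le> \<sigma> * (hq (T (- s) u) - hq u + s) \<and> \<sigma> * (hq (T (- s) u) - hq u + s) \<le> ?r0" if u: "u \<in> Y" for u
  proof -
    have "\<bar>hq (T (- s) u) - (hq u + - s)\<bar> \<le> ?r0" by (rule hq_shift[OF u])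
    then have "\<bar>hq (T (- s) u) - hq u + s\<bar> \<le> ?r0" by (simp add: algebra_simps)
    then show ?thesis by (rule sig_bound[OF \<sigma>])
  qed
  have eqs: "\<sigma> * (hq (T (- s) u) - j) = \<sigma> * (hq u - j) + \<sigma> * (hq (T (- s) u) - hq u + s) - \<sigma> * s" for u
    by (simp add: algebra_simps)
  define p' where "p' = T (- s) p"
  define q' where "q' = T (- s) q"
  have p'Y: "p' \<in> Y" and q'Y: "q' \<in> Y" unfolding p'_def q'_def using T_in pY qY by auto
  have gp': "C' < \<sigma> * (hq p' - j)" unfolding p'_def using eqs[of p] shift[OF pY] c1 ss by linarith
  have gq': "\<sigma> * (hq q' - j) < - C'" unfolding q'_def using eqs[of q] shift[OF qY] c2 ss by linarith
  have p'A: "p' \<in> halfspace Y E a b"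
  proof -
    have "p' \<notin> halfspace Y E b a" using gp' hB unfolding a_def b_def by force
    then show ?thesis using median_side[OF med cvx aY bY p'Y e] p'Y unfolding halfspace_def by auto
  qed
  have q'B: "q' \<in> halfspace Y E b a"
  proof -
    have "q' \<notin> halfspace Y E a b" using gq' hA unfolding a_def b_def by force
    then show ?thesis using median_side[OF med cvx aY bY q'Y e] q'Y unfolding halfspace_def by auto
  qed
  have Tp: "T s p' = p" unfolding p'_def using fpow_cancel2[OF bij_phi] by simp
  have Tq: "T s q' = q" unfolding q'_def using fpow_cancel2[OF bij_phi] by simp
  have pH: "p \<in> halfspace Y E (T s a) (T s b)" using half_map[OF T_aut[of s] aY bY p'A] Tp by simp
  have "q \<in> halfspace Y E (T s b) (T s a)" using half_map[OF T_aut[of s] bY aY q'B] Tq by simp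
  then have qH: "q \<notin> halfspace Y E (T s a) (T s b)" unfolding halfspace_def by auto
  have "\<exists>j'. Suc j' < length \<gamma> \<and> (\<gamma> ! j', \<gamma> ! Suc j') \<in> dual_edges Y E (T s a) (T s b)"
    by (rule walk_cross[OF w T_in[OF aY] T_in[OF bY]]) (use pH qH in \<open>simp_all add: p_def q_def\<close>)
  then show ?thesis unfolding a_def b_def .
qed

end

context main_ess begin
lemma P1r:
  assumes C0: "0 \<le> C'" and cen: "\<forall>a b. a \<in> Y \<and> b \<in> Y \<and> E a b \<and> essential Y E a b \<longrightarrow>
   (\<exists>\<sigma> j. (\<sigma> = 1 \<or> \<sigma> = -1) \<and> (\<forall>y\<in>halfspace Y E a b. - C' \<le> \<sigma> * (hq y - j)) \<and>
      (\<forall>y\<in>halfspace Y E b a. \<sigma> * (hq y - j) \<le> C'))"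
    and N': "real_of_int (2 * int DD + int tau * (2 * C' + rho (2 * DD) + 1)) \<le> N'" and k: "0 < k" and a: "a \<in> Y" and b: "b \<in> Y" and e: "E a b"
      and es: "essential Y E a b" and s: "s \<in> {int k, - int k}"
      and x: "x \<in> halfspace Y E a b \<inter> fpow \<phi> s ` halfspace Y E b a"
      and y: "y \<in> halfspace Y E a b \<inter> fpow \<phi> s ` halfspace Y E b a"
  shows "real (gdist Y E x y) \<le> real k * N'"
proof -
  have ex: "\<exists>\<sigma> j. (\<sigma> = 1 \<or> \<sigma> = -1) \<and> (\<forall>y\<in>halfspace Y E a b. - C' \<le> \<sigma> * (hq y - j)) \<and>
      (\<forall>y\<in>halfspace Y E b a. \<sigma> * (hq y - j) \<le> C')" using cen a b e es by simp
  then obtain \<sigma> j where \<sigma>: "\<sigma> = 1 \<or> \<sigma> = -1" and hA: "\<forall>y\<in>halfspace Y E a b. - C' \<le> \<sigma> * (hq y - j)"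
      and hB: "\<forall>y\<in>halfspace Y E b a. \<sigma> * (hq y - j) \<le> C'" by blast
  have "int (dd x y) \<le> int k * (2 * int DD + int tau * (2 * C' + rho (2 * DD) + 1))"
    by (rule part1[OF C0 a b \<sigma> hA hB k s x y])
  then have "real_of_int (int (dd x y)) \<le> real_of_int (int k * (2 * int DD + int tau * (2 * C' + rho (2 * DD) + 1)))"
    by (simp only: of_int_le_iff)
  then have "real (dd x y) \<le> real k * real_of_int (2 * int DD + int tau * (2 * C' + rho (2 * DD) + 1))"
    by (simp only: of_int_mult of_int_of_nat_eq)
  also have "\<dots> \<le> real k * N'" using N' by (rule mult_left_mono) simp
  finally show ?thesis .
qed

lemma P2r:
  assumes C0: "0 \<le> C'" and cen: "\<forall>a b. a \<in> Y \<and> b \<in> Y \<and> E a b \<and> essential Y E a b \<longrightarrow>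
   (\<exists>\<sigma> j. (\<sigma> = 1 \<or> \<sigma> = -1) \<and> (\<forall>y\<in>halfspace Y E a b. - C' \<le> \<sigma> * (hq y - j)) \<and>
      (\<forall>y\<in>halfspace Y E b a. \<sigma> * (hq y - j) \<le> C'))"
    and M': "real_of_int (2 * int DD + int tau * (2 * C' + rho (2 * DD) + rho (2 * DD + 1) + 1) + 1) \<le> M'"
    and k: "0 < k" and geo: "geodesic_in Y E \<gamma>" and i: "Suc i < length \<gamma>"
    and es: "essential Y E (\<gamma> ! i) (\<gamma> ! Suc i)"
    and h1: "real k * M' \<le> real (min (gdist Y E (hd \<gamma>) (\<gamma> ! i)) (gdist Y E (hd \<gamma>) (\<gamma> ! Suc i)))"
    and h2: "real k * M' \<le> real (min (gdist Y E (last \<gamma>) (\<gamma> ! i)) (gdist Y E (last \<gamma>) (\<gamma> ! Suc i)))"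
    and s: "s \<in> {int k, - int k}"
  shows "\<exists>j. Suc j < length \<gamma> \<and> (\<gamma> ! j, \<gamma> ! Suc j) \<in> dual_edges Y E (fpow \<phi> s (\<gamma> ! i)) (fpow \<phi> s (\<gamma> ! Suc i))"
proof -
  define Mi where "Mi = 2 * int DD + int tau * (2 * C' + rho (2 * DD) + rho (2 * DD + 1) + 1) + 1"
  have w: "walk_in Y E \<gamma>" using geo unfolding geodesic_in_def by blast
  have a: "\<gamma> ! i \<in> Y" and b: "\<gamma> ! Suc i \<in> Y" using walk_set[OF w] i by auto
  have e: "E (\<gamma> ! i) (\<gamma> ! Suc i)" using walk_step[OF w i] .
  have ex: "\<exists>\<sigma> j. (\<sigma> = 1 \<or> \<sigma> = -1) \<and> (\<forall>y\<in>halfspace Y E (\<gamma> ! i) (\<gamma> ! Suc i). - C' \<le> \<sigma> * (hq y - j)) \<and>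
      (\<forall>y\<in>halfspace Y E (\<gamma> ! Suc i) (\<gamma> ! i). \<sigma> * (hq y - j) \<le> C')" using cen a b e es by simp
  then obtain \<sigma> j where \<sigma>: "\<sigma> = 1 \<or> \<sigma> = -1" and hA: "\<forall>y\<in>halfspace Y E (\<gamma> ! i) (\<gamma> ! Suc i). - C' \<le> \<sigma> * (hq y - j)"
    and hB: "\<forall>y\<in>halfspace Y E (\<gamma> ! Suc i) (\<gamma> ! i). \<sigma> * (hq y - j) \<le> C'" by blast
  have km: "real k * real_of_int Mi \<le> real k * M'" using M' unfolding Mi_def by (rule mult_left_mono) simp
  have m1: "real (min (dd (hd \<gamma>) (\<gamma> ! i)) (dd (hd \<gamma>) (\<gamma> ! Suc i))) \<le> real (dd (hd \<gamma>) (\<gamma> ! i))" by simp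
  have m2: "real (min (dd (last \<gamma>) (\<gamma> ! i)) (dd (last \<gamma>) (\<gamma> ! Suc i))) \<le> real (dd (last \<gamma>) (\<gamma> ! i))" by simp
  have "real k * real_of_int Mi \<le> real (dd (hd \<gamma>) (\<gamma> ! i))" using km h1 m1 by linarith
  then have "real_of_int (int k * Mi) \<le> real_of_int (int (dd (hd \<gamma>) (\<gamma> ! i)))"
    by (simp only: of_int_mult of_int_of_nat_eq)
  then have hp: "int k * Mi \<le> int (dd (hd \<gamma>) (\<gamma> ! i))" by (simp only: of_int_le_iff)
  have "real k * real_of_int Mi \<le> real (dd (last \<gamma>) (\<gamma> ! i))" using km h2 m2 by linarith
  then have "real_of_int (int k * Mi) \<le> real_of_int (int (dd (last \<gamma>) (\<gamma> ! i)))"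
    by (simp only: of_int_mult of_int_of_nat_eq)
  then have hq: "int k * Mi \<le> int (dd (last \<gamma>) (\<gamma> ! i))" by (simp only: of_int_le_iff)
  show ?thesis by (rule part2[OF C0 \<sigma> geo i hA hB k s hp[unfolded Mi_def] hq[unfolded Mi_def]])
qed
end

context main_ctx begin

lemma final:
  "\<exists>N M :: real. \<forall>N' \<ge> N. \<forall>M' \<ge> M. \<forall>k::nat. 0 < k \<longrightarrow>
     (\<forall>a b. a \<in> Y \<and> b \<in> Y \<and> E a b \<and> essential Y E a b \<longrightarrow>
        (\<forall>s \<in> {int k, - int k}.
           \<forall>x \<in> halfspace Y E a b \<inter> fpow \<phi> s ` halfspace Y E b a.
           \<forall>y \<in> halfspace Y E a b \<inter> fpow \<phi> s ` halfspace Y E b a.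
             real (gdist Y E x y) \<le> real k * N')) \<and>
     (\<forall>\<gamma> i. geodesic_in Y E \<gamma> \<and> Suc i < length \<gamma> \<and>
        essential Y E (\<gamma> ! i) (\<gamma> ! Suc i) \<and>
        real k * M' \<le> real (min (gdist Y E (hd \<gamma>) (\<gamma> ! i)) (gdist Y E (hd \<gamma>) (\<gamma> ! Suc i))) \<and>
        real k * M' \<le> real (min (gdist Y E (last \<gamma>) (\<gamma> ! i)) (gdist Y E (last \<gamma>) (\<gamma> ! Suc i))) \<longrightarrow>
        (\<forall>s \<in> {int k, - int k}. \<exists>j. Suc j < length \<gamma> \<and>
           (\<gamma> ! j, \<gamma> ! Suc j) \<in> dual_edges Y E (fpow \<phi> s (\<gamma> ! i)) (fpow \<phi> s (\<gamma> ! Suc i))))"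
proof (cases "\<exists>a0 b0. a0 \<in> Y \<and> b0 \<in> Y \<and> E a0 b0 \<and> essential Y E a0 b0")
  case False
  have geo_edge: "\<gamma> ! i \<in> Y \<and> \<gamma> ! Suc i \<in> Y \<and> E (\<gamma> ! i) (\<gamma> ! Suc i)"
    if "geodesic_in Y E \<gamma>" "Suc i < length \<gamma>" for \<gamma> i
  proof -
    have w: "walk_in Y E \<gamma>" using that unfolding geodesic_in_def by blast
    show ?thesis using walk_set[OF w] walk_step[OF w that(2)] that(2) by auto
  qed
  show ?thesis
    by (rule exI[of _ 0], rule exI[of _ 0]) (use False geo_edge in blast)
next
  case True
  then obtain a0 b0 where ab0: "a0 \<in> Y" "b0 \<in> Y" "E a0 b0" "essential Y E a0 b0" by blast
  interpret me: main_ess E G Y \<phi> a0 b0 by (rule main_ess.intro[OF main_ctx_axioms main_ess_axioms.intro[OF ab0]])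
  from me.centered obtain C' where CC: "0 \<le> C' \<and> (\<forall>a b. a \<in> Y \<and> b \<in> Y \<and> E a b \<and> essential Y E a b \<longrightarrow>
   (\<exists>\<sigma> j. (\<sigma> = 1 \<or> \<sigma> = -1) \<and> (\<forall>y\<in>halfspace Y E a b. - C' \<le> \<sigma> * (hq y - j)) \<and>
      (\<forall>y\<in>halfspace Y E b a. \<sigma> * (hq y - j) \<le> C')))" ..
  have C0: "0 \<le> C'" using CC by (rule conjunct1)
  have cen: "\<forall>a b. a \<in> Y \<and> b \<in> Y \<and> E a b \<and> essential Y E a b \<longrightarrow>
   (\<exists>\<sigma> j. (\<sigma> = 1 \<or> \<sigma> = -1) \<and> (\<forall>y\<in>halfspace Y E a b. - C' \<le> \<sigma> * (hq y - j)) \<and>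
      (\<forall>y\<in>halfspace Y E b a. \<sigma> * (hq y - j) \<le> C'))" using CC by (rule conjunct2)
  define Ni where "Ni = 2 * int DD + int tau * (2 * C' + me.rho (2 * DD) + 1)"
  define Mi where "Mi = 2 * int DD + int tau * (2 * C' + me.rho (2 * DD) + me.rho (2 * DD + 1) + 1) + 1"
  note P1 = me.P1r[OF C0 cen, folded Ni_def]
  note P2 = me.P2r[OF C0 cen, folded Mi_def]
  show ?thesis
  proof (rule exI[of _ "real_of_int Ni"], rule exI[of _ "real_of_int Mi"], intro allI impI)
    fix N' M' :: real and k :: nat
    assume N': "real_of_int Ni \<le> N'" and M': "real_of_int Mi \<le> M'" and k: "0 < k"
    show "(\<forall>a b. a \<in> Y \<and> b \<in> Y \<and> E a b \<and> essential Y E a b \<longrightarrow>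
        (\<forall>s \<in> {int k, - int k}.
           \<forall>x \<in> halfspace Y E a b \<inter> fpow \<phi> s ` halfspace Y E b a.
           \<forall>y \<in> halfspace Y E a b \<inter> fpow \<phi> s ` halfspace Y E b a.
             real (gdist Y E x y) \<le> real k * N')) \<and>
     (\<forall>\<gamma> i. geodesic_in Y E \<gamma> \<and> Suc i < length \<gamma> \<and>
        essential Y E (\<gamma> ! i) (\<gamma> ! Suc i) \<and>
        real k * M' \<le> real (min (gdist Y E (hd \<gamma>) (\<gamma> ! i)) (gdist Y E (hd \<gamma>) (\<gamma> ! Suc i))) \<and>
        real k * M' \<le> real (min (gdist Y E (last \<gamma>) (\<gamma> ! i)) (gdist Y E (last \<gamma>) (\<gamma> ! Suc i))) \<longrightarrow>
        (\<forall>s \<in> {int k, - int k}. \<exists>j. Suc j < length \<gamma> \<and>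
           (\<gamma> ! j, \<gamma> ! Suc j) \<in> dual_edges Y E (fpow \<phi> s (\<gamma> ! i)) (fpow \<phi> s (\<gamma> ! Suc i))))"
    proof (rule conjI)
      show "\<forall>a b. a \<in> Y \<and> b \<in> Y \<and> E a b \<and> essential Y E a b \<longrightarrow>
        (\<forall>s \<in> {int k, - int k}.
           \<forall>x \<in> halfspace Y E a b \<inter> fpow \<phi> s ` halfspace Y E b a.
           \<forall>y \<in> halfspace Y E a b \<inter> fpow \<phi> s ` halfspace Y E b a.
             real (gdist Y E x y) \<le> real k * N')"
      proof (intro allI impI ballI)
        fix a b s x y
        assume h: "a \<in> Y \<and> b \<in> Y \<and> E a b \<and> essential Y E a b" and s: "s \<in> {int k, - int k}"
          and x: "x \<in> halfspace Y E a b \<inter> fpow \<phi> s ` halfspace Y E b a"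
          and y: "y \<in> halfspace Y E a b \<inter> fpow \<phi> s ` halfspace Y E b a"
        have a: "a \<in> Y" and b: "b \<in> Y" and e: "E a b" and es: "essential Y E a b" using h by auto
        show "real (gdist Y E x y) \<le> real k * N'" by (rule P1[OF N' k a b e es s x y])
      qed
      show "\<forall>\<gamma> i. geodesic_in Y E \<gamma> \<and> Suc i < length \<gamma> \<and>
        essential Y E (\<gamma> ! i) (\<gamma> ! Suc i) \<and>
        real k * M' \<le> real (min (gdist Y E (hd \<gamma>) (\<gamma> ! i)) (gdist Y E (hd \<gamma>) (\<gamma> ! Suc i))) \<and>
        real k * M' \<le> real (min (gdist Y E (last \<gamma>) (\<gamma> ! i)) (gdist Y E (last \<gamma>) (\<gamma> ! Suc i))) \<longrightarrow>
        (\<forall>s \<in> {int k, - int k}. \<exists>j. Suc j < length \<gamma> \<and>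
           (\<gamma> ! j, \<gamma> ! Suc j) \<in> dual_edges Y E (fpow \<phi> s (\<gamma> ! i)) (fpow \<phi> s (\<gamma> ! Suc i)))"
      proof (intro allI impI ballI)
        fix \<gamma> i s
        assume h: "geodesic_in Y E \<gamma> \<and> Suc i < length \<gamma> \<and>
        essential Y E (\<gamma> ! i) (\<gamma> ! Suc i) \<and>
        real k * M' \<le> real (min (gdist Y E (hd \<gamma>) (\<gamma> ! i)) (gdist Y E (hd \<gamma>) (\<gamma> ! Suc i))) \<and>
        real k * M' \<le> real (min (gdist Y E (last \<gamma>) (\<gamma> ! i)) (gdist Y E (last \<gamma>) (\<gamma> ! Suc i)))"
          and s: "s \<in> {int k, - int k}"
        have g: "geodesic_in Y E \<gamma>" and i: "Suc i < length \<gamma>" and es: "essential Y E (\<gamma> ! i) (\<gamma> ! Suc i)"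
          and h1: "real k * M' \<le> real (min (gdist Y E (hd \<gamma>) (\<gamma> ! i)) (gdist Y E (hd \<gamma>) (\<gamma> ! Suc i)))"
          and h2: "real k * M' \<le> real (min (gdist Y E (last \<gamma>) (\<gamma> ! i)) (gdist Y E (last \<gamma>) (\<gamma> ! Suc i)))"
          using h by auto
        show "\<exists>j. Suc j < length \<gamma> \<and> (\<gamma> ! j, \<gamma> ! Suc j) \<in> dual_edges Y E (fpow \<phi> s (\<gamma> ! i)) (fpow \<phi> s (\<gamma> ! Suc i))"
          by (rule P2[OF M' k g i es h1 h2 s])
      qed
    qed
  qed
qed

end

theorem lemma5p7:
  fixes E :: "'v \<Rightarrow> 'v \<Rightarrow> bool" and G :: "('v \<Rightarrow> 'v) set"
    and Y :: "'v set" and \<phi> :: "'v \<Rightarrow> 'v"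
  assumes "median_graph E" and "locally_finite E" and "free_cocompact_group E G"
    and "quasiline E G Y \<phi>"
  shows "\<exists>N M :: real. \<forall>N' \<ge> N. \<forall>M' \<ge> M. \<forall>k::nat. 0 < k \<longrightarrow>
     (\<forall>a b. a \<in> Y \<and> b \<in> Y \<and> E a b \<and> essential Y E a b \<longrightarrow>
        (\<forall>s \<in> {int k, - int k}.
           \<forall>x \<in> halfspace Y E a b \<inter> fpow \<phi> s ` halfspace Y E b a.
           \<forall>y \<in> halfspace Y E a b \<inter> fpow \<phi> s ` halfspace Y E b a.
             real (gdist Y E x y) \<le> real k * N')) \<and>
     (\<forall>\<gamma> i. geodesic_in Y E \<gamma> \<and> Suc i < length \<gamma> \<and>
        essential Y E (\<gamma> ! i) (\<gamma> ! Suc i) \<and>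
        real k * M' \<le> real (min (gdist Y E (hd \<gamma>) (\<gamma> ! i)) (gdist Y E (hd \<gamma>) (\<gamma> ! Suc i))) \<and>
        real k * M' \<le> real (min (gdist Y E (last \<gamma>) (\<gamma> ! i)) (gdist Y E (last \<gamma>) (\<gamma> ! Suc i))) \<longrightarrow>
        (\<forall>s \<in> {int k, - int k}. \<exists>j. Suc j < length \<gamma> \<and>
           (\<gamma> ! j, \<gamma> ! Suc j) \<in> dual_edges Y E (fpow \<phi> s (\<gamma> ! i)) (fpow \<phi> s (\<gamma> ! Suc i))))"
proof -
  interpret main_ctx E G Y \<phi> using assms by (rule main_ctx.intro)
  show ?thesis by (rule final)
qed


end
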